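(* Let $A,B,C$ be a bipartite LR triple over $\mathbb F$ of diameter $d$. Then $d$ is even, and for $0\le i\le d$ each of $\alpha_i,\alpha'_i,\alpha''_i,\beta_i,\beta'_i,\beta''_i$ is zero if $i$ is odd and nonzero if $i$ is even.
   Context: Let $V$ be a vector space over a field $\mathbb F$ with $\dim V=d+1$. A decomposition of $V$ is a sequence $(V_i)_{i=0}^d$ of one-dimensional subspaces with $V=\bigoplus V_i$; $X$ lowers it if $XV_i=V_{i-1}$ ($1\le i\le d$), $XV_0=0$; raises it if $XV_i=V_{i+1}$ ($0\le i\le d-1$), $XV_d=0$. An ordered pair $X,Y$ is an LR pair if some decomposition (unique, the $(X,Y)$-decomposition) is lowered by $X$ and raised by $Y$. An LR triple is $A,B,C\in\mathrm{End}(V)$ with $A,B$; $B,C$; $C,A$ LR pairs. With $E_i,E'_i,E''_i$ the projections onto the $i$-th components of the $(A,B)$-, $(B,C)$-, $(C,A)$-decompositions, the LR triple is bipartite if $\mathrm{tr}(CE_i)=\mathrm{tr}(AE'_i)=\mathrm{tr}(BE''_i)=0$ for all $0\le i\le d$. An $(X,Y)$-basis is a basis $(v_i)$ with $v_i$ in the $i$-th component of the $(X,Y)$-decomposition and $Xv_i=v_{i-1}$ ($1\le i\le d$). An upper triangular Toeplitz matrix with parameters $(\gamma_i)_{i=0}^d$ has $(i,k)$-entry $\gamma_{k-i}$ for $i\le k$ and $0$ otherwise; two bases are compatible if the transition matrix between them is upper triangular Toeplitz with diagonal $1$. The transition matrix from a $(C,B)$-basis to a compatible $(C,A)$-basis (resp.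 from an $(A,C)$-basis to a compatible $(A,B)$-basis; from a $(B,A)$-basis to a compatible $(B,C)$-basis) exists and is independent of choices; its parameters are $(\alpha_i)$ (resp. $(\alpha'_i)$; $(\alpha''_i)$), and those of its inverse are $(\beta_i)$ (resp. $(\beta'_i)$; $(\beta''_i)$). *)

theory Defs
  imports "Jordan_Normal_Form.Matrix"
begin

text \<open>The vector space V of dimension d+1 over the field 'a is modelled as
  carrier_vec (Suc d); endomorphisms of V are (d+1) x (d+1) matrices acting
  by X *v v.  Sequences indexed by 0..d are functions on nat; entries with
  index > d are fixed by convention (empty subspace / zero vector / zero coefficient).\<close>

definition vsum :: "nat \<Rightarrow> (nat \<Rightarrow> 'a::field vec) \<Rightarrow> 'a vec" where
  "vsum d f = vec (Suc d) (\<lambda>j. \<Sum>i\<le>d. f i $ j)"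

definition mtrace :: "'a::field mat \<Rightarrow> 'a" where
  "mtrace M = (\<Sum>i<dim_row M. M $$ (i,i))"

definition is_decomp :: "nat \<Rightarrow> (nat \<Rightarrow> 'a::field vec set) \<Rightarrow> bool" where
  "is_decomp d Vs \<longleftrightarrow>
     (\<forall>i\<le>d. \<exists>v\<in>carrier_vec (Suc d). v \<noteq> 0\<^sub>v (Suc d) \<and> Vs i = {c \<cdot>\<^sub>v v | c. True}) \<and>
     (\<forall>w\<in>carrier_vec (Suc d). \<exists>!u. (\<forall>i\<le>d. u i \<in> Vs i) \<and> (\<forall>i>d. u i = 0\<^sub>v (Suc d)) \<and> w = vsum d u) \<and>
     (\<forall>i>d. Vs i = {})"

definition lowers :: "nat \<Rightarrow> 'a::field mat \<Rightarrow> (nat \<Rightarrow> 'a vec set) \<Rightarrow> bool" where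
  "lowers d X Vs \<longleftrightarrow>
     (\<forall>i. 1 \<le> i \<and> i \<le> d \<longrightarrow> (\<lambda>v. X *\<^sub>v v) ` Vs i = Vs (i - 1)) \<and>
     (\<lambda>v. X *\<^sub>v v) ` Vs 0 = {0\<^sub>v (Suc d)}"

definition raises :: "nat \<Rightarrow> 'a::field mat \<Rightarrow> (nat \<Rightarrow> 'a vec set) \<Rightarrow> bool" where
  "raises d Y Vs \<longleftrightarrow>
     (\<forall>i<d. (\<lambda>v. Y *\<^sub>v v) ` Vs i = Vs (Suc i)) \<and>
     (\<lambda>v. Y *\<^sub>v v) ` Vs d = {0\<^sub>v (Suc d)}"

definition LR_pair :: "nat \<Rightarrow> 'a::field mat \<Rightarrow> 'a mat \<Rightarrow> bool" where
  "LR_pair d X Y \<longleftrightarrow> X \<in> carrier_mat (Suc d) (Suc d) \<and> Y \<in> carrier_mat (Suc d) (Suc d) \<and>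
     (\<exists>Vs. is_decomp d Vs \<and> lowers d X Vs \<and> raises d Y Vs)"

definition LR_decomp :: "nat \<Rightarrow> 'a::field mat \<Rightarrow> 'a mat \<Rightarrow> nat \<Rightarrow> 'a vec set" where
  "LR_decomp d X Y = (THE Vs. is_decomp d Vs \<and> lowers d X Vs \<and> raises d Y Vs)"

definition LR_triple :: "nat \<Rightarrow> 'a::field mat \<Rightarrow> 'a mat \<Rightarrow> 'a mat \<Rightarrow> bool" where
  "LR_triple d A B C \<longleftrightarrow> LR_pair d A B \<and> LR_pair d B C \<and> LR_pair d C A"

definition component :: "nat \<Rightarrow> (nat \<Rightarrow> 'a::field vec set) \<Rightarrow> nat \<Rightarrow> 'a vec \<Rightarrow> 'a vec" where
  "component d Vs i w =
     (THE u. (\<forall>j\<le>d. u j \<in> Vs j) \<and> (\<forall>j>d. u j = 0\<^sub>v (Suc d)) \<and> w = vsum d u) i"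

definition proj_mat :: "nat \<Rightarrow> (nat \<Rightarrow> 'a::field vec set) \<Rightarrow> nat \<Rightarrow> 'a mat" where
  "proj_mat d Vs i = mat (Suc d) (Suc d) (\<lambda>(r, c). component d Vs i (unit_vec (Suc d) c) $ r)"

definition bipartite_LR_triple :: "nat \<Rightarrow> 'a::field mat \<Rightarrow> 'a mat \<Rightarrow> 'a mat \<Rightarrow> bool" where
  "bipartite_LR_triple d A B C \<longleftrightarrow> LR_triple d A B C \<and>
     (\<forall>i\<le>d. mtrace (C * proj_mat d (LR_decomp d A B) i) = 0 \<and>
             mtrace (A * proj_mat d (LR_decomp d B C) i) = 0 \<and>
             mtrace (B * proj_mat d (LR_decomp d C A) i) = 0)"

definition is_basis :: "nat \<Rightarrow> (nat \<Rightarrow> 'a::field vec) \<Rightarrow> bool" where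
  "is_basis d v \<longleftrightarrow> (\<forall>i\<le>d. v i \<in> carrier_vec (Suc d)) \<and>
     (\<forall>w\<in>carrier_vec (Suc d). \<exists>!c. (\<forall>i>d. c i = 0) \<and> w = vsum d (\<lambda>i. c i \<cdot>\<^sub>v v i))"

definition LR_basis :: "nat \<Rightarrow> 'a::field mat \<Rightarrow> 'a mat \<Rightarrow> (nat \<Rightarrow> 'a vec) \<Rightarrow> bool" where
  "LR_basis d X Y v \<longleftrightarrow> is_basis d v \<and> (\<forall>i\<le>d. v i \<in> LR_decomp d X Y i) \<and>
     (\<forall>i. 1 \<le> i \<and> i \<le> d \<longrightarrow> X *\<^sub>v v i = v (i - 1))"

definition is_transition :: "nat \<Rightarrow> (nat \<Rightarrow> 'a::field vec) \<Rightarrow> (nat \<Rightarrow> 'a vec) \<Rightarrow> 'a mat \<Rightarrow> bool" where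
  "is_transition d u w T \<longleftrightarrow> T \<in> carrier_mat (Suc d) (Suc d) \<and>
     (\<forall>k\<le>d. w k = vsum d (\<lambda>i. T $$ (i, k) \<cdot>\<^sub>v u i))"

definition toeplitz :: "nat \<Rightarrow> 'a::field mat \<Rightarrow> (nat \<Rightarrow> 'a) \<Rightarrow> bool" where
  "toeplitz d T g \<longleftrightarrow> T \<in> carrier_mat (Suc d) (Suc d) \<and>
     (\<forall>i\<le>d. \<forall>k\<le>d. T $$ (i, k) = (if i \<le> k then g (k - i) else 0))"

definition trans_param :: "nat \<Rightarrow> 'a::field mat \<Rightarrow> 'a mat \<Rightarrow> 'a mat \<Rightarrow> nat \<Rightarrow> 'a" where
  "trans_param d X Y Z i = (THE x. \<exists>u w T g. LR_basis d X Y u \<and> LR_basis d X Z w \<and>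
     is_transition d u w T \<and> toeplitz d T g \<and> g 0 = 1 \<and> g i = x)"

definition trans_inv_param :: "nat \<Rightarrow> 'a::field mat \<Rightarrow> 'a mat \<Rightarrow> 'a mat \<Rightarrow> nat \<Rightarrow> 'a" where
  "trans_inv_param d X Y Z i = (THE x. \<exists>u w T g T' h. LR_basis d X Y u \<and> LR_basis d X Z w \<and>
     is_transition d u w T \<and> toeplitz d T g \<and> g 0 = 1 \<and>
     T' \<in> carrier_mat (Suc d) (Suc d) \<and> inverts_mat T T' \<and> toeplitz d T' h \<and> h i = x)"

definition alpha where "alpha d A B C i = trans_param d C B A i"
definition alpha' where "alpha' d A B C i = trans_param d A C B i"
definition alpha'' where "alpha'' d A B C i = trans_param d B A C i"
definition beta where "beta d A B C i = trans_inv_param d C B A i"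
definition beta' where "beta' d A B C i = trans_inv_param d A C B i"
definition beta'' where "beta'' d A B C i = trans_inv_param d B A C i"

end

theory Submission
  imports Defs
begin


lemma vsum_carrier[simp]: "vsum d f \<in> carrier_vec (Suc d)"
  unfolding vsum_def by simp

lemma dim_vsum[simp]: "dim_vec (vsum d f) = Suc d"
  unfolding vsum_def by simp

lemma vsum_index: "j < Suc d \<Longrightarrow> vsum d f $ j = (\<Sum>i\<le>d. f i $ j)"
  unfolding vsum_def by simp

lemma vsum_cong: "(\<And>i. i \<le> d \<Longrightarrow> f i = g i) \<Longrightarrow> vsum d f = vsum d g"
  unfolding vsum_def by (rule arg_cong[where f="vec (Suc d)"]) auto

lemma vsum_zero: assumes "\<And>i. i \<le> d \<Longrightarrow> f i = 0\<^sub>v (Suc d)"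
  shows "vsum d f = 0\<^sub>v (Suc d)"
  by (rule eq_vecI) (auto simp: vsum_index assms)

lemma vsum_single: assumes "k \<le> d" "f k \<in> carrier_vec (Suc d)"
  "\<And>i. i \<le> d \<Longrightarrow> i \<noteq> k \<Longrightarrow> f i = 0\<^sub>v (Suc d)"
  shows "vsum d f = f k"
proof (rule eq_vecI)
  fix j assume j: "j < dim_vec (f k)"
  hence j': "j < Suc d" using assms(2) by auto
  have "(\<Sum>i\<le>d. f i $ j) = f k $ j + (\<Sum>i\<in>{..d}-{k}. f i $ j)"
    using assms(1) by (simp add: sum.remove)
  moreover have "(\<Sum>i\<in>{..d}-{k}. f i $ j) = 0" using assms(3) j' by (intro sum.neutral) auto
  ultimately have "(\<Sum>i\<le>d. f i $ j) = f k $ j" by simp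
  then show "vsum d f $ j = f k $ j" using j' by (simp add: vsum_index)
qed (use assms in auto)

lemma mult_vsum: assumes M: "M \<in> carrier_mat (Suc d) (Suc d)"
  and F: "\<And>i. i \<le> d \<Longrightarrow> F i \<in> carrier_vec (Suc d)"
  shows "M *\<^sub>v vsum d F = vsum d (\<lambda>i. M *\<^sub>v F i)"
proof (rule eq_vecI)
  fix j assume "j < dim_vec (vsum d (\<lambda>i. M *\<^sub>v F i))"
  hence j: "j < Suc d" by simp
  have "(M *\<^sub>v vsum d F) $ j = (\<Sum>k<Suc d. M $$ (j,k) * (\<Sum>i\<le>d. F i $ k))"
    using M j by (simp add: scalar_prod_def vsum_index atLeast0LessThan)
  also have "\<dots> = (\<Sum>i\<le>d. \<Sum>k<Suc d. M $$ (j,k) * F i $ k)"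
    unfolding sum_distrib_left by (rule sum.swap)
  also have "\<dots> = vsum d (\<lambda>i. M *\<^sub>v F i) $ j"
  proof -
    have "\<And>i. i \<le> d \<Longrightarrow> (M *\<^sub>v F i) $ j = (\<Sum>k<Suc d. M $$ (j,k) * F i $ k)"
    proof -
      fix i assume "i \<le> d"
      hence "dim_vec (F i) = Suc d" using F by (metis carrier_vecD)
      then show "(M *\<^sub>v F i) $ j = (\<Sum>k<Suc d. M $$ (j,k) * F i $ k)"
        using M j by (simp add: scalar_prod_def atLeast0LessThan del: sum.lessThan_Suc)
    qed
    then show ?thesis using j by (simp add: vsum_index del: sum.lessThan_Suc)
  qed
  finally show "(M *\<^sub>v vsum d F) $ j = vsum d (\<lambda>i. M *\<^sub>v F i) $ j" .
qed (use M in auto)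

lemma vsum_double: assumes "\<And>k. k \<le> d \<Longrightarrow> u k \<in> carrier_vec (Suc d)"
  shows "vsum d (\<lambda>i. c i \<cdot>\<^sub>v vsum d (\<lambda>k. e i k \<cdot>\<^sub>v u k)) =
         vsum d (\<lambda>k. (\<Sum>i\<le>d. c i * e i k) \<cdot>\<^sub>v u k)"
proof (rule eq_vecI)
  fix j assume "j < dim_vec (vsum d (\<lambda>k. (\<Sum>i\<le>d. c i * e i k) \<cdot>\<^sub>v u k))"
  hence j: "j < Suc d" by simp
  have uj: "\<And>k. k \<le> d \<Longrightarrow> j < dim_vec (u k)" using assms j by (metis carrier_vecD)
  have "vsum d (\<lambda>i. c i \<cdot>\<^sub>v vsum d (\<lambda>k. e i k \<cdot>\<^sub>v u k)) $ j =
        (\<Sum>i\<le>d. c i * (\<Sum>k\<le>d. e i k * u k $ j))"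
    using j uj by (simp add: vsum_index)
  also have "\<dots> = (\<Sum>k\<le>d. (\<Sum>i\<le>d. c i * e i k) * u k $ j)"
  proof -
    have "(\<Sum>i\<le>d. c i * (\<Sum>k\<le>d. e i k * u k $ j)) = (\<Sum>i\<le>d. \<Sum>k\<le>d. c i * e i k * u k $ j)"
      by (simp add: sum_distrib_left mult.assoc)
    also have "\<dots> = (\<Sum>k\<le>d. \<Sum>i\<le>d. c i * e i k * u k $ j)" by (rule sum.swap)
    also have "\<dots> = (\<Sum>k\<le>d. (\<Sum>i\<le>d. c i * e i k) * u k $ j)" by (simp add: sum_distrib_right)
    finally show ?thesis .
  qed
  also have "\<dots> = vsum d (\<lambda>k. (\<Sum>i\<le>d. c i * e i k) \<cdot>\<^sub>v u k) $ j"
    using j uj by (simp add: vsum_index)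
  finally show "vsum d (\<lambda>i. c i \<cdot>\<^sub>v vsum d (\<lambda>k. e i k \<cdot>\<^sub>v u k)) $ j =
        vsum d (\<lambda>k. (\<Sum>i\<le>d. c i * e i k) \<cdot>\<^sub>v u k) $ j" .
qed simp

lemma vsum_rev: "vsum d (\<lambda>i. f (d - i)) = vsum d f"
proof -
  have "\<And>j. (\<Sum>i\<le>d. f (d - i) $ j) = (\<Sum>i\<le>d. f i $ j)"
  proof -
    fix j
    have "(\<Sum>i\<le>d. f i $ j) = (\<Sum>i<Suc d. f (Suc d - Suc i) $ j)"
      using sum.nat_diff_reindex[of "\<lambda>i. f i $ j" "Suc d"] by (simp add: lessThan_Suc_atMost)
    then show "(\<Sum>i\<le>d. f (d - i) $ j) = (\<Sum>i\<le>d. f i $ j)" by (simp add: lessThan_Suc_atMost)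
  qed
  then show ?thesis unfolding vsum_def by simp
qed

lemma vsum_units: assumes "x \<in> carrier_vec (Suc d)"
  shows "vsum d (\<lambda>r. (x $ r) \<cdot>\<^sub>v unit_vec (Suc d) r) = x"
proof (rule eq_vecI)
  fix j assume "j < dim_vec x" hence j: "j < Suc d" using assms by auto
  have "(\<Sum>i\<le>d. ((x $ i) \<cdot>\<^sub>v unit_vec (Suc d) i) $ j) = (\<Sum>i\<le>d. if i = j then x $ j else 0)"
    by (rule sum.cong) (use j in auto)
  also have "\<dots> = x $ j" using j by simp
  finally show "vsum d (\<lambda>r. (x $ r) \<cdot>\<^sub>v unit_vec (Suc d) r) $ j = x $ j"
    using j by (simp add: vsum_index)
qed (use assms in auto)





lemma smult_cancel: assumes "v \<in> carrier_vec n" "v \<noteq> 0\<^sub>v n" "a \<cdot>\<^sub>v v = b \<cdot>\<^sub>v v"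
  shows "a = (b::'a::field)"
proof -
  obtain j where j: "j < n" "v $ j \<noteq> 0" using assms(1,2) by (metis carrier_vecD eq_vecI index_zero_vec)
  have "(a \<cdot>\<^sub>v v) $ j = (b \<cdot>\<^sub>v v) $ j" using assms(3) by simp
  then have "a * v $ j = b * v $ j" using j assms(1) by simp
  then show ?thesis using j by simp
qed

lemma smult_eq_zero_vecD: assumes "v \<in> carrier_vec n" "a \<cdot>\<^sub>v v = 0\<^sub>v n" "a \<noteq> (0::'a::field)"
  shows "v = 0\<^sub>v n"
proof -
  have "v = (1/a) \<cdot>\<^sub>v (a \<cdot>\<^sub>v v)" using assms(1,3) by (simp add: smult_smult_assoc)
  also have "\<dots> = (1/a) \<cdot>\<^sub>v 0\<^sub>v n" using assms(2) by simp
  also have "\<dots> = 0\<^sub>v n" by (intro eq_vecI) auto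
  finally show ?thesis .
qed

lemma zero_smult_carrier: "v \<in> carrier_vec n \<Longrightarrow> (0::'a::field) \<cdot>\<^sub>v v = 0\<^sub>v n"
  by (intro eq_vecI) auto

definition cf :: "nat \<Rightarrow> (nat \<Rightarrow> 'a::field vec) \<Rightarrow> 'a vec \<Rightarrow> nat \<Rightarrow> 'a" where
  "cf d u x = (THE c. (\<forall>i>d. c i = 0) \<and> x = vsum d (\<lambda>i. c i \<cdot>\<^sub>v u i))"

lemma cf_spec: assumes "is_basis d u" "x \<in> carrier_vec (Suc d)"
  shows "(\<forall>i>d. cf d u x i = 0) \<and> x = vsum d (\<lambda>i. cf d u x i \<cdot>\<^sub>v u i)"
proof -
  have "\<exists>!c. (\<forall>i>d. c i = 0) \<and> x = vsum d (\<lambda>i. c i \<cdot>\<^sub>v u i)" using assms unfolding is_basis_def by blast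
  then show ?thesis unfolding cf_def by (rule theI')
qed

lemma cf_rep: "is_basis d u \<Longrightarrow> x \<in> carrier_vec (Suc d) \<Longrightarrow> x = vsum d (\<lambda>i. cf d u x i \<cdot>\<^sub>v u i)"
  using cf_spec by blast

lemma cf_eq: assumes "is_basis d u" "x = vsum d (\<lambda>i. c i \<cdot>\<^sub>v u i)" "j \<le> d"
  shows "cf d u x j = c j"
proof -
  define c' where "c' = (\<lambda>i. if i \<le> d then c i else 0)"
  have x: "x = vsum d (\<lambda>i. c' i \<cdot>\<^sub>v u i)" unfolding assms(2) c'_def by (rule vsum_cong) simp
  have "\<exists>!c. (\<forall>i>d. c i = 0) \<and> x = vsum d (\<lambda>i. c i \<cdot>\<^sub>v u i)" using assms(1) unfolding is_basis_def
    using assms(2) vsum_carrier by blast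
  moreover have "(\<forall>i>d. c' i = 0) \<and> x = vsum d (\<lambda>i. c' i \<cdot>\<^sub>v u i)" using x c'_def by simp
  moreover have "(\<forall>i>d. cf d u x i = 0) \<and> x = vsum d (\<lambda>i. cf d u x i \<cdot>\<^sub>v u i)"
    using cf_spec[OF assms(1)] assms(2) vsum_carrier by blast
  ultimately have "cf d u x = c'" by blast
  then show ?thesis using assms(3) c'_def by simp
qed

lemma basis_carrier: "is_basis d u \<Longrightarrow> i \<le> d \<Longrightarrow> u i \<in> carrier_vec (Suc d)"
  unfolding is_basis_def by blast

lemma basis_zero_smult: "is_basis d u \<Longrightarrow> i \<le> d \<Longrightarrow> (0::'a::field) \<cdot>\<^sub>v u i = 0\<^sub>v (Suc d)"
  using zero_smult_carrier basis_carrier by blast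

lemma basis_nonzero: assumes "is_basis d u" "k \<le> d" shows "u k \<noteq> 0\<^sub>v (Suc d)"
proof
  assume z: "u k = 0\<^sub>v (Suc d)"
  have "vsum d (\<lambda>i. (if i = k then 1 else 0) \<cdot>\<^sub>v u i) = (if k = k then 1 else 0) \<cdot>\<^sub>v u k"
    by (rule vsum_single) (use assms basis_carrier basis_zero_smult in auto)
  hence "0\<^sub>v (Suc d) = vsum d (\<lambda>i. (if i = k then 1 else 0) \<cdot>\<^sub>v u i)" using z by simp
  moreover have "0\<^sub>v (Suc d) = vsum d (\<lambda>i. 0 \<cdot>\<^sub>v u i)"
    by (rule vsum_zero[symmetric], rule basis_zero_smult[OF assms(1)])
  ultimately have eq: "vsum d (\<lambda>i. (if i = k then 1 else 0) \<cdot>\<^sub>v u i) = vsum d (\<lambda>i. 0 \<cdot>\<^sub>v u i)" by simp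
  have e1: "cf d u (vsum d (\<lambda>i. (if i = k then 1 else 0) \<cdot>\<^sub>v u i)) k = (if k = k then 1 else 0)"
    by (rule cf_eq[OF assms(1) refl assms(2)])
  have e2: "cf d u (vsum d (\<lambda>i. (0::'a) \<cdot>\<^sub>v u i)) k = 0"
    by (rule cf_eq[OF assms(1) refl assms(2)])
  from e1 e2 eq show False by simp
qed

lemma cf_basis: assumes "is_basis d u" "k \<le> d" "j \<le> d"
  shows "cf d u (u k) j = (if j = k then 1 else 0)"
proof -
  have "vsum d (\<lambda>i. (if i = k then 1 else 0) \<cdot>\<^sub>v u i) = (if k = k then 1 else 0) \<cdot>\<^sub>v u k"
    by (rule vsum_single) (use assms basis_carrier basis_zero_smult in auto)
  hence "u k = vsum d (\<lambda>i. (if i = k then 1 else 0) \<cdot>\<^sub>v u i)" by simp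
  then show ?thesis using cf_eq[OF assms(1) _ assms(3)] by auto
qed

lemma cf_lin: assumes "is_basis d u" "\<And>i. i \<le> d \<Longrightarrow> z i \<in> carrier_vec (Suc d)" "j \<le> d"
  shows "cf d u (vsum d (\<lambda>i. c i \<cdot>\<^sub>v z i)) j = (\<Sum>i\<le>d. c i * cf d u (z i) j)"
proof -
  have "vsum d (\<lambda>i. c i \<cdot>\<^sub>v z i) = vsum d (\<lambda>i. c i \<cdot>\<^sub>v vsum d (\<lambda>k. cf d u (z i) k \<cdot>\<^sub>v u k))"
    by (rule vsum_cong) (use cf_rep[OF assms(1) assms(2)] in auto)
  also have "\<dots> = vsum d (\<lambda>k. (\<Sum>i\<le>d. c i * cf d u (z i) k) \<cdot>\<^sub>v u k)"
    by (rule vsum_double) (use assms basis_carrier in auto)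
  finally show ?thesis using cf_eq[OF assms(1) _ assms(3)] by auto
qed

lemma cf_zero: assumes "is_basis d u" "j \<le> d" shows "cf d u (0\<^sub>v (Suc d)) j = 0"
proof -
  have "0\<^sub>v (Suc d) = vsum d (\<lambda>i. 0 \<cdot>\<^sub>v u i)"
    by (rule vsum_zero[symmetric], rule basis_zero_smult[OF assms(1)])
  then show ?thesis using cf_eq[OF assms(1) _ assms(2)] by auto
qed

lemma cf_smult: assumes "is_basis d u" "x \<in> carrier_vec (Suc d)" "j \<le> d"
  shows "cf d u (a \<cdot>\<^sub>v x) j = a * cf d u x j"
proof -
  have "vsum d (\<lambda>i. (if i = 0 then a else 0) \<cdot>\<^sub>v x) = (if 0 = (0::nat) then a else 0) \<cdot>\<^sub>v x"
    by (rule vsum_single) (use assms zero_smult_carrier in force)+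
  hence "a \<cdot>\<^sub>v x = vsum d (\<lambda>i. (if i = 0 then a else 0) \<cdot>\<^sub>v x)" by simp
  then have "cf d u (a \<cdot>\<^sub>v x) j = (\<Sum>i\<le>d. (if i = 0 then a else 0) * cf d u x j)"
    using cf_lin[OF assms(1), of "\<lambda>_. x" j "\<lambda>i. if i = 0 then a else 0"] assms by simp
  also have "\<dots> = (\<Sum>i\<le>d. if i = 0 then a * cf d u x j else 0)" by (rule sum.cong) auto
  also have "\<dots> = a * cf d u x j" by simp
  finally show ?thesis .
qed

lemma smult_vsum: assumes "\<And>i. i \<le> d \<Longrightarrow> F i \<in> carrier_vec (Suc d)"
  shows "a \<cdot>\<^sub>v vsum d F = vsum d (\<lambda>i. a \<cdot>\<^sub>v F i)"
proof (rule eq_vecI)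
  fix j assume "j < dim_vec (vsum d (\<lambda>i. a \<cdot>\<^sub>v F i))" hence j: "j < Suc d" by simp
  have "\<And>i. i \<le> d \<Longrightarrow> j < dim_vec (F i)" using assms j by (metis carrier_vecD)
  then show "(a \<cdot>\<^sub>v vsum d F) $ j = vsum d (\<lambda>i. a \<cdot>\<^sub>v F i) $ j"
    using j by (simp add: vsum_index sum_distrib_left)
qed simp





section \<open>decompositions\<close>

definition span1 :: "'a::field vec \<Rightarrow> 'a vec set" where
  "span1 v = {c \<cdot>\<^sub>v v | c. True}"

lemma mult_zero_vec': "M \<in> carrier_mat n n \<Longrightarrow> M *\<^sub>v 0\<^sub>v n = (0\<^sub>v n :: 'a::field vec)"
  by (intro eq_vecI) (auto simp: scalar_prod_def)

lemma span1_in: "v \<in> span1 v" unfolding span1_def by (rule CollectI, rule exI[of _ 1]) simp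

lemma span1_smult: "c \<cdot>\<^sub>v v \<in> span1 v" unfolding span1_def by blast

lemma span1_D: "y \<in> span1 v \<Longrightarrow> \<exists>c. y = c \<cdot>\<^sub>v v" unfolding span1_def by blast

lemma span1_same: assumes "v \<in> carrier_vec n" "u \<in> span1 v" "u \<noteq> 0\<^sub>v n"
  shows "span1 u = span1 v"
proof -
  obtain c where c: "u = c \<cdot>\<^sub>v v" using span1_D[OF assms(2)] by blast
  have c0: "c \<noteq> 0" using c assms(1,3) zero_smult_carrier by blast
  show ?thesis
  proof
    show "span1 u \<subseteq> span1 v" unfolding span1_def c by (auto simp: smult_smult_assoc)
    show "span1 v \<subseteq> span1 u"
    proof
      fix y assume "y \<in> span1 v"
      then obtain a where a: "y = a \<cdot>\<^sub>v v" using span1_D by blast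
      have "y = (a / c) \<cdot>\<^sub>v u" unfolding a c using c0 by (simp add: smult_smult_assoc)
      then show "y \<in> span1 u" using span1_smult by metis
    qed
  qed
qed

lemma span1_carrier: "v \<in> carrier_vec n \<Longrightarrow> y \<in> span1 v \<Longrightarrow> y \<in> carrier_vec n"
  unfolding span1_def by auto

lemma decomp_gen: assumes "is_decomp d Vs" "i \<le> d"
  shows "\<exists>v\<in>carrier_vec (Suc d). v \<noteq> 0\<^sub>v (Suc d) \<and> Vs i = span1 v"
  using assms unfolding is_decomp_def span1_def by blast

lemma decomp_carrier: "is_decomp d Vs \<Longrightarrow> i \<le> d \<Longrightarrow> x \<in> Vs i \<Longrightarrow> x \<in> carrier_vec (Suc d)"
  using decomp_gen span1_carrier by metis

lemma decomp_high: "is_decomp d Vs \<Longrightarrow> i > d \<Longrightarrow> Vs i = {}"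
  unfolding is_decomp_def by blast

lemma image_span1: assumes "X \<in> carrier_mat n n" "v \<in> carrier_vec n"
  shows "(\<lambda>x. X *\<^sub>v x) ` span1 v = span1 (X *\<^sub>v v)"
proof (intro equalityI subsetI)
  fix y assume "y \<in> (\<lambda>x. X *\<^sub>v x) ` span1 v"
  then obtain c where "y = X *\<^sub>v (c \<cdot>\<^sub>v v)" unfolding span1_def by blast
  then show "y \<in> span1 (X *\<^sub>v v)" using mult_mat_vec[OF assms] span1_smult by metis
next
  fix y assume "y \<in> span1 (X *\<^sub>v v)"
  then obtain c where "y = c \<cdot>\<^sub>v (X *\<^sub>v v)" unfolding span1_def by blast
  then have "y = X *\<^sub>v (c \<cdot>\<^sub>v v)" using mult_mat_vec[OF assms] by metis
  then show "y \<in> (\<lambda>x. X *\<^sub>v x) ` span1 v" using span1_smult by blast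
qed

definition lrb :: "nat \<Rightarrow> 'a::field mat \<Rightarrow> 'a mat \<Rightarrow> (nat \<Rightarrow> 'a vec set) \<Rightarrow> (nat \<Rightarrow> 'a vec) \<Rightarrow> bool" where
  "lrb d X Y Vs u \<longleftrightarrow> X \<in> carrier_mat (Suc d) (Suc d) \<and> Y \<in> carrier_mat (Suc d) (Suc d) \<and>
     is_decomp d Vs \<and> lowers d X Vs \<and> raises d Y Vs \<and> is_basis d u \<and>
     (\<forall>i\<le>d. u i \<in> Vs i \<and> Vs i = span1 (u i)) \<and> (\<forall>i. 1 \<le> i \<and> i \<le> d \<longrightarrow> X *\<^sub>v u i = u (i - 1))"

lemma decomp_is_basis: assumes dec: "is_decomp d Vs" and sp: "\<And>i. i \<le> d \<Longrightarrow> Vs i = span1 (u i)"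
  and car: "\<And>i. i \<le> d \<Longrightarrow> u i \<in> carrier_vec (Suc d)" and nz: "\<And>i. i \<le> d \<Longrightarrow> u i \<noteq> 0\<^sub>v (Suc d)"
  shows "is_basis d u"
  unfolding is_basis_def
proof (intro conjI allI ballI impI)
  show "\<And>i. i \<le> d \<Longrightarrow> u i \<in> carrier_vec (Suc d)" by fact
  fix w :: "'a vec" assume w: "w \<in> carrier_vec (Suc d)"
  have ex1: "\<exists>!comp. (\<forall>i\<le>d. comp i \<in> Vs i) \<and> (\<forall>i>d. comp i = 0\<^sub>v (Suc d)) \<and> w = vsum d comp"
    using dec w unfolding is_decomp_def by blast
  then obtain comp where comp: "\<forall>i\<le>d. comp i \<in> Vs i" "\<forall>i>d. comp i = 0\<^sub>v (Suc d)" "w = vsum d comp"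
    by blast
  define c where "c = (\<lambda>i. if i \<le> d then (SOME a. comp i = a \<cdot>\<^sub>v u i) else 0)"
  have cc: "\<And>i. i \<le> d \<Longrightarrow> comp i = c i \<cdot>\<^sub>v u i"
  proof -
    fix i assume i: "i \<le> d"
    have "\<exists>a. comp i = a \<cdot>\<^sub>v u i" using comp(1) i sp span1_D by metis
    then have "comp i = (SOME a. comp i = a \<cdot>\<^sub>v u i) \<cdot>\<^sub>v u i" by (rule someI_ex)
    then show "comp i = c i \<cdot>\<^sub>v u i" unfolding c_def using i by simp
  qed
  show "\<exists>!c. (\<forall>i>d. c i = 0) \<and> w = vsum d (\<lambda>i. c i \<cdot>\<^sub>v u i)"
  proof (rule ex1I[of _ c])
    show "(\<forall>i>d. c i = 0) \<and> w = vsum d (\<lambda>i. c i \<cdot>\<^sub>v u i)"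
    proof
      show "\<forall>i>d. c i = 0" unfolding c_def by simp
      show "w = vsum d (\<lambda>i. c i \<cdot>\<^sub>v u i)" unfolding comp(3) by (rule vsum_cong) (rule cc)
    qed
  next
    fix c' assume c': "(\<forall>i>d. c' i = 0) \<and> w = vsum d (\<lambda>i. c' i \<cdot>\<^sub>v u i)"
    define comp' where "comp' = (\<lambda>i. if i \<le> d then c' i \<cdot>\<^sub>v u i else 0\<^sub>v (Suc d))"
    have h1: "(\<forall>i\<le>d. comp' i \<in> Vs i) \<and> (\<forall>i>d. comp' i = 0\<^sub>v (Suc d)) \<and> w = vsum d comp'"
    proof (intro conjI allI impI)
      have "vsum d comp' = vsum d (\<lambda>i. c' i \<cdot>\<^sub>v u i)" by (rule vsum_cong) (simp add: comp'_def)
      then show "w = vsum d comp'" using c' by simp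
    qed (use sp span1_smult comp'_def in auto)
    have h2: "(\<forall>i\<le>d. comp i \<in> Vs i) \<and> (\<forall>i>d. comp i = 0\<^sub>v (Suc d)) \<and> w = vsum d comp"
      using comp by blast
    have "comp' = comp" using ex1
    proof (rule ex1E)
      fix x assume "\<forall>y. ((\<forall>i\<le>d. y i \<in> Vs i) \<and> (\<forall>i>d. y i = 0\<^sub>v (Suc d)) \<and> w = vsum d y) \<longrightarrow> y = x"
      then have "comp' = x" "comp = x" using h1 h2 by blast+
      then show "comp' = comp" by simp
    qed
    show "c' = c"
    proof
      fix i show "c' i = c i"
      proof (cases "i \<le> d")
        case True
        have "c' i \<cdot>\<^sub>v u i = comp' i" using True by (simp add: comp'_def)
        also have "\<dots> = comp i" using \<open>comp' = comp\<close> by simp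
        also have "\<dots> = c i \<cdot>\<^sub>v u i" by (rule cc[OF True])
        finally have "c' i \<cdot>\<^sub>v u i = c i \<cdot>\<^sub>v u i" .
        then show ?thesis by (rule smult_cancel[OF car[OF True] nz[OF True]])
      next
        case False then show ?thesis using c' unfolding c_def by auto
      qed
    qed
  qed
qed

lemma decomp_basis: assumes dec: "is_decomp d Vs" and low: "lowers d X Vs" and rai: "raises d Y Vs"
  and X: "X \<in> carrier_mat (Suc d) (Suc d)" and Y: "Y \<in> carrier_mat (Suc d) (Suc d)"
  shows "\<exists>u. lrb d X Y Vs u"
proof -
  obtain v where v: "v \<in> carrier_vec (Suc d)" "v \<noteq> 0\<^sub>v (Suc d)" "Vs d = span1 v"
    using decomp_gen[OF dec] by blast
  define u where "u = (\<lambda>i. ((\<lambda>x. X *\<^sub>v x) ^^ (d - i)) v)"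
  have step: "\<And>i. 1 \<le> i \<Longrightarrow> i \<le> d \<Longrightarrow> u (i - 1) = X *\<^sub>v u i"
  proof -
    fix i :: nat assume "1 \<le> i" "i \<le> d"
    then have "d - (i - 1) = Suc (d - i)" by arith
    then show "u (i - 1) = X *\<^sub>v u i" unfolding u_def by simp
  qed
  have main: "\<And>m. m \<le> d \<Longrightarrow> u (d - m) \<in> Vs (d - m) \<and> u (d - m) \<noteq> 0\<^sub>v (Suc d)"
  proof -
    fix m show "m \<le> d \<Longrightarrow> u (d - m) \<in> Vs (d - m) \<and> u (d - m) \<noteq> 0\<^sub>v (Suc d)"
    proof (induction m)
      case 0
      then show ?case using v span1_in unfolding u_def by auto
    next
      case (Suc m)
      define i where "i = d - m"
      have i: "1 \<le> i" "i \<le> d" "d - Suc m = i - 1" using Suc.prems unfolding i_def by auto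
      have ui: "u i \<in> Vs i" "u i \<noteq> 0\<^sub>v (Suc d)" using Suc unfolding i_def by auto
      obtain g where g: "g \<in> carrier_vec (Suc d)" "g \<noteq> 0\<^sub>v (Suc d)" "Vs i = span1 g"
        using decomp_gen[OF dec i(2)] by blast
      obtain g' where g': "g' \<in> carrier_vec (Suc d)" "g' \<noteq> 0\<^sub>v (Suc d)" "Vs (i - 1) = span1 g'"
        using decomp_gen[OF dec] i by (meson diff_le_self order_trans)
      have img: "(\<lambda>x. X *\<^sub>v x) ` Vs i = Vs (i - 1)" using low i unfolding lowers_def by blast
      have "g' \<in> Vs (i - 1)" using g'(3) span1_in by simp
      then have "g' \<in> (\<lambda>x. X *\<^sub>v x) ` span1 g" using img g(3) by simp
      then have "g' \<in> span1 (X *\<^sub>v g)" using image_span1[OF X g(1)] by simp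
      then obtain c' where "g' = c' \<cdot>\<^sub>v (X *\<^sub>v g)" using span1_D by blast
      then have Xg: "X *\<^sub>v g \<noteq> 0\<^sub>v (Suc d)" using g'(2) by auto
      obtain c where c: "u i = c \<cdot>\<^sub>v g" using ui(1) g(3) span1_D by blast
      have c0: "c \<noteq> 0"
      proof
        assume "c = 0" then have "u i = 0\<^sub>v (Suc d)" using c zero_smult_carrier[OF g(1)] by simp
        then show False using ui(2) by simp
      qed
      have "X *\<^sub>v u i = c \<cdot>\<^sub>v (X *\<^sub>v g)" using c mult_mat_vec[OF X g(1)] by simp
      moreover have "X *\<^sub>v g \<in> carrier_vec (Suc d)" using X g(1) by auto
      ultimately have nz: "X *\<^sub>v u i \<noteq> 0\<^sub>v (Suc d)"
        using smult_eq_zero_vecD[of "X *\<^sub>v g" "Suc d" c] Xg c0 X by auto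
      have mem: "X *\<^sub>v u i \<in> Vs (i - 1)" using img ui(1) by blast
      show ?case using step[OF i(1,2)] nz mem i(3) by simp
    qed
  qed
  have ui: "\<And>i. i \<le> d \<Longrightarrow> u i \<in> Vs i \<and> u i \<noteq> 0\<^sub>v (Suc d)"
  proof -
    fix i assume i: "i \<le> d"
    have "d - (d - i) = i" using i by simp
    then show "u i \<in> Vs i \<and> u i \<noteq> 0\<^sub>v (Suc d)" using main[of "d - i"] by simp
  qed
  have car: "\<And>i. i \<le> d \<Longrightarrow> u i \<in> carrier_vec (Suc d)" using ui decomp_carrier[OF dec] by blast
  have sp: "\<And>i. i \<le> d \<Longrightarrow> Vs i = span1 (u i)"
  proof -
    fix i assume i: "i \<le> d"
    obtain g where g: "g \<in> carrier_vec (Suc d)" "g \<noteq> 0\<^sub>v (Suc d)" "Vs i = span1 g"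
      using decomp_gen[OF dec i] by blast
    then show "Vs i = span1 (u i)" using span1_same[of g "Suc d" "u i"] ui[OF i] by simp
  qed
  have nzs: "\<And>i. i \<le> d \<Longrightarrow> u i \<noteq> 0\<^sub>v (Suc d)" using ui by blast
  have "is_basis d u" by (rule decomp_is_basis[OF dec sp car nzs])
  moreover have "\<forall>i. 1 \<le> i \<and> i \<le> d \<longrightarrow> X *\<^sub>v u i = u (i - 1)" using step by simp
  moreover have "\<forall>i\<le>d. u i \<in> Vs i \<and> Vs i = span1 (u i)" using ui sp by blast
  ultimately have "lrb d X Y Vs u" unfolding lrb_def using X Y dec low rai by blast
  then show ?thesis by blast
qed


lemma mult_vsum_smult: assumes M: "M \<in> carrier_mat (Suc d) (Suc d)"
  and F: "\<And>i. i \<le> d \<Longrightarrow> F i \<in> carrier_vec (Suc d)"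
  shows "M *\<^sub>v vsum d (\<lambda>i. c i \<cdot>\<^sub>v F i) = vsum d (\<lambda>i. c i \<cdot>\<^sub>v (M *\<^sub>v F i))"
proof -
  have "M *\<^sub>v vsum d (\<lambda>i. c i \<cdot>\<^sub>v F i) = vsum d (\<lambda>i. M *\<^sub>v (c i \<cdot>\<^sub>v F i))"
    by (rule mult_vsum[OF M]) (use F in auto)
  also have "\<dots> = vsum d (\<lambda>i. c i \<cdot>\<^sub>v (M *\<^sub>v F i))"
    by (rule vsum_cong) (rule mult_mat_vec[OF M F])
  finally show ?thesis .
qed

lemma mult_carrier: "M \<in> carrier_mat n n \<Longrightarrow> M *\<^sub>v v \<in> carrier_vec n"
  unfolding carrier_vec_def carrier_mat_def by simp

lemma lrbD: assumes "lrb d X Y Vs u"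
  shows "X \<in> carrier_mat (Suc d) (Suc d)" "Y \<in> carrier_mat (Suc d) (Suc d)"
    "is_decomp d Vs" "lowers d X Vs" "raises d Y Vs" "is_basis d u"
    "\<And>i. i \<le> d \<Longrightarrow> u i \<in> Vs i" "\<And>i. i \<le> d \<Longrightarrow> Vs i = span1 (u i)"
    "\<And>i. 1 \<le> i \<Longrightarrow> i \<le> d \<Longrightarrow> X *\<^sub>v u i = u (i - 1)"
  using assms unfolding lrb_def by auto

lemma lrb_carrier: "lrb d X Y Vs u \<Longrightarrow> i \<le> d \<Longrightarrow> u i \<in> carrier_vec (Suc d)"
  using lrbD(6) basis_carrier by blast

lemma lrb_nonzero: "lrb d X Y Vs u \<Longrightarrow> i \<le> d \<Longrightarrow> u i \<noteq> 0\<^sub>v (Suc d)"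
  using lrbD(6) basis_nonzero by blast

lemma lrb_low0: assumes "lrb d X Y Vs u" shows "X *\<^sub>v u 0 = 0\<^sub>v (Suc d)"
proof -
  have "(\<lambda>v. X *\<^sub>v v) ` Vs 0 = {0\<^sub>v (Suc d)}" using lrbD(4)[OF assms] unfolding lowers_def by blast
  then show ?thesis using lrbD(7)[OF assms, of 0] by blast
qed

lemma lrb_raise_top: assumes "lrb d X Y Vs u" shows "Y *\<^sub>v u d = 0\<^sub>v (Suc d)"
proof -
  have "(\<lambda>v. Y *\<^sub>v v) ` Vs d = {0\<^sub>v (Suc d)}" using lrbD(5)[OF assms] unfolding raises_def by blast
  then show ?thesis using lrbD(7)[OF assms, of d] by blast
qed

lemma lrb_raise: assumes L: "lrb d X Y Vs u" and i: "i < d"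
  shows "\<exists>b. b \<noteq> 0 \<and> Y *\<^sub>v u i = b \<cdot>\<^sub>v u (Suc i)"
proof -
  have img: "(\<lambda>v. Y *\<^sub>v v) ` Vs i = Vs (Suc i)" using lrbD(5)[OF L] i unfolding raises_def by blast
  have "(\<lambda>v. Y *\<^sub>v v) ` Vs i = span1 (Y *\<^sub>v u i)"
    using lrbD(8)[OF L, of i] i image_span1[OF lrbD(2)[OF L] lrb_carrier[OF L, of i]] by simp
  then have eq: "span1 (Y *\<^sub>v u i) = span1 (u (Suc i))" using img lrbD(8)[OF L, of "Suc i"] i by simp
  have "Y *\<^sub>v u i \<in> span1 (u (Suc i))" using eq span1_in by metis
  then obtain b where b: "Y *\<^sub>v u i = b \<cdot>\<^sub>v u (Suc i)" using span1_D by blast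
  have "u (Suc i) \<in> span1 (Y *\<^sub>v u i)" using eq span1_in by metis
  then obtain a where a: "u (Suc i) = a \<cdot>\<^sub>v (Y *\<^sub>v u i)" using span1_D by blast
  have "b \<noteq> 0"
  proof
    assume "b = 0"
    then have "Y *\<^sub>v u i = 0\<^sub>v (Suc d)" using b zero_smult_carrier[OF lrb_carrier[OF L, of "Suc i"]] i by simp
    then have "u (Suc i) = a \<cdot>\<^sub>v 0\<^sub>v (Suc d)" using a by simp
    also have "\<dots> = 0\<^sub>v (Suc d)" by (intro eq_vecI) auto
    finally show False using lrb_nonzero[OF L, of "Suc i"] i by simp
  qed
  then show ?thesis using b by blast
qed

lemma lrb_ker: assumes L: "lrb d X Y Vs u"
  shows "Vs d = {x \<in> carrier_vec (Suc d). Y *\<^sub>v x = 0\<^sub>v (Suc d)}"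
proof (intro equalityI subsetI)
  fix x assume x: "x \<in> Vs d"
  then obtain c where c: "x = c \<cdot>\<^sub>v u d" using lrbD(8)[OF L, of d] span1_D by blast
  have "Y *\<^sub>v x = c \<cdot>\<^sub>v (Y *\<^sub>v u d)" using c mult_mat_vec[OF lrbD(2)[OF L] lrb_carrier[OF L]] by simp
  also have "\<dots> = 0\<^sub>v (Suc d)" using lrb_raise_top[OF L] by (intro eq_vecI) auto
  finally show "x \<in> {x \<in> carrier_vec (Suc d). Y *\<^sub>v x = 0\<^sub>v (Suc d)}"
    using decomp_carrier[OF lrbD(3)[OF L] _ x] by simp
next
  fix x assume "x \<in> {x \<in> carrier_vec (Suc d). Y *\<^sub>v x = 0\<^sub>v (Suc d)}"
  then have x: "x \<in> carrier_vec (Suc d)" "Y *\<^sub>v x = 0\<^sub>v (Suc d)" by auto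
  note B = lrbD(6)[OF L]
  define c where "c = cf d u x"
  define b where "b = (\<lambda>i. SOME b. b \<noteq> 0 \<and> Y *\<^sub>v u i = b \<cdot>\<^sub>v u (Suc i))"
  have b: "\<And>i. i < d \<Longrightarrow> b i \<noteq> 0 \<and> Y *\<^sub>v u i = b i \<cdot>\<^sub>v u (Suc i)"
  proof -
    fix i assume "i < d"
    from lrb_raise[OF L this] show "b i \<noteq> 0 \<and> Y *\<^sub>v u i = b i \<cdot>\<^sub>v u (Suc i)"
      unfolding b_def by (rule someI_ex)
  qed
  have xr: "x = vsum d (\<lambda>i. c i \<cdot>\<^sub>v u i)" using cf_rep[OF B x(1)] unfolding c_def .
  have Yx: "Y *\<^sub>v x = vsum d (\<lambda>i. c i \<cdot>\<^sub>v (Y *\<^sub>v u i))"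
    unfolding xr by (rule mult_vsum_smult[OF lrbD(2)[OF L] lrb_carrier[OF L]])
  have cz: "\<And>j. j < d \<Longrightarrow> c j = 0"
  proof -
    fix j assume j: "j < d"
    have cY: "\<And>i. i \<le> d \<Longrightarrow> cf d u (Y *\<^sub>v u i) (Suc j) = (if i = j then b j else 0)"
    proof -
      fix i assume i: "i \<le> d"
      show "cf d u (Y *\<^sub>v u i) (Suc j) = (if i = j then b j else 0)"
      proof (cases "i < d")
        case True
        have "cf d u (Y *\<^sub>v u i) (Suc j) = b i * cf d u (u (Suc i)) (Suc j)"
          using b[OF True] cf_smult[OF B lrb_carrier[OF L, of "Suc i"]] True j by simp
        then show ?thesis using cf_basis[OF B, of "Suc i" "Suc j"] True j by auto
      next
        case False
        then have "i = d" using i by simp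
        then show ?thesis using lrb_raise_top[OF L] cf_zero[OF B, of "Suc j"] j by auto
      qed
    qed
    have "cf d u (Y *\<^sub>v x) (Suc j) = (\<Sum>i\<le>d. c i * cf d u (Y *\<^sub>v u i) (Suc j))"
      unfolding Yx by (rule cf_lin[OF B]) (use lrbD(2)[OF L] lrb_carrier[OF L] j in auto)
    also have "\<dots> = (\<Sum>i\<le>d. if i = j then c j * b j else 0)"
      by (rule sum.cong) (auto simp: cY)
    also have "\<dots> = c j * b j" using j by simp
    finally have "c j * b j = 0" using x(2) cf_zero[OF B, of "Suc j"] j by simp
    then show "c j = 0" using b[OF j] by simp
  qed
  have "x = c d \<cdot>\<^sub>v u d"
    unfolding xr
  proof (rule vsum_single)
    show "c d \<cdot>\<^sub>v u d \<in> carrier_vec (Suc d)" using lrb_carrier[OF L, of d] by simp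
    fix i assume "i \<le> d" "i \<noteq> d"
    then have "c i = 0" using cz by simp
    then show "c i \<cdot>\<^sub>v u i = 0\<^sub>v (Suc d)" using zero_smult_carrier[OF lrb_carrier[OF L \<open>i \<le> d\<close>]] by simp
  qed simp
  then show "x \<in> Vs d" using lrbD(8)[OF L, of d] span1_smult by simp
qed

lemma LR_decomp_eq: assumes dec: "is_decomp d Vs" and low: "lowers d X Vs" and rai: "raises d Y Vs"
  and X: "X \<in> carrier_mat (Suc d) (Suc d)" and Y: "Y \<in> carrier_mat (Suc d) (Suc d)"
  shows "LR_decomp d X Y = Vs"
proof -
  have uniq: "Ws = Vs" if W: "is_decomp d Ws \<and> lowers d X Ws \<and> raises d Y Ws" for Ws
  proof -
    obtain u where u: "lrb d X Y Vs u" using decomp_basis[OF dec low rai X Y] by blast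
    obtain w where w: "lrb d X Y Ws w" using decomp_basis[of d Ws X Y] W X Y by blast
    have top: "Ws d = Vs d" using lrb_ker[OF u] lrb_ker[OF w] by simp
    have m: "\<And>m. m \<le> d \<Longrightarrow> Ws (d - m) = Vs (d - m)"
    proof -
      fix m show "m \<le> d \<Longrightarrow> Ws (d - m) = Vs (d - m)"
      proof (induction m)
        case 0 then show ?case using top by simp
      next
        case (Suc m)
        have i: "1 \<le> d - m" "d - m \<le> d" "d - m - 1 = d - Suc m" using Suc.prems by auto
        have lw: "\<forall>i. 1 \<le> i \<and> i \<le> d \<longrightarrow> (\<lambda>v. X *\<^sub>v v) ` Ws i = Ws (i - 1)"
          using W unfolding lowers_def by blast
        have lv: "\<forall>i. 1 \<le> i \<and> i \<le> d \<longrightarrow> (\<lambda>v. X *\<^sub>v v) ` Vs i = Vs (i - 1)"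
          using low unfolding lowers_def by blast
        have "Ws (d - Suc m) = (\<lambda>v. X *\<^sub>v v) ` Ws (d - m)"
          using lw i by simp
        also have "\<dots> = (\<lambda>v. X *\<^sub>v v) ` Vs (d - m)" using Suc by simp
        also have "\<dots> = Vs (d - Suc m)" using lv i by simp
        finally show ?case .
      qed
    qed
    show "Ws = Vs"
    proof
      fix i show "Ws i = Vs i"
      proof (cases "i \<le> d")
        case True
        then have "d - (d - i) = i" by simp
        then show ?thesis using m[of "d - i"] by simp
      next
        case False
        then show ?thesis using decomp_high[OF dec] decomp_high[of d Ws] W by simp
      qed
    qed
  qed
  show ?thesis unfolding LR_decomp_def
  proof (rule the_equality)
    show "is_decomp d Vs \<and> lowers d X Vs \<and> raises d Y Vs" using dec low rai by blast
  next
    fix Ws assume "is_decomp d Ws \<and> lowers d X Ws \<and> raises d Y Ws"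
    then show "Ws = Vs" by (rule uniq)
  qed
qed


lemma vsum_rev_smult: "vsum d (\<lambda>i. c i \<cdot>\<^sub>v u (d - i)) = vsum d (\<lambda>i. c (d - i) \<cdot>\<^sub>v u i)"
proof -
  have "vsum d (\<lambda>i. c (d - i) \<cdot>\<^sub>v u i) = vsum d (\<lambda>i. (\<lambda>i. c (d - i) \<cdot>\<^sub>v u i) (d - i))"
    by (rule vsum_rev[symmetric])
  also have "\<dots> = vsum d (\<lambda>i. c i \<cdot>\<^sub>v u (d - i))" by (rule vsum_cong) simp
  finally show ?thesis by simp
qed

lemma basis_rev: assumes B: "is_basis d u" shows "is_basis d (\<lambda>j. u (d - j))"
  unfolding is_basis_def
proof (intro conjI allI impI ballI)
  fix i assume "i \<le> d" then show "u (d - i) \<in> carrier_vec (Suc d)" using basis_carrier[OF B] by simp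
next
  fix w :: "'a vec" assume w: "w \<in> carrier_vec (Suc d)"
  define c where "c = (\<lambda>i. if i \<le> d then cf d u w (d - i) else 0)"
  show "\<exists>!c. (\<forall>i>d. c i = 0) \<and> w = vsum d (\<lambda>i. c i \<cdot>\<^sub>v u (d - i))"
  proof (rule ex1I[of _ c])
    have "vsum d (\<lambda>i. c i \<cdot>\<^sub>v u (d - i)) = vsum d (\<lambda>i. c (d - i) \<cdot>\<^sub>v u i)" by (rule vsum_rev_smult)
    also have "\<dots> = vsum d (\<lambda>i. cf d u w i \<cdot>\<^sub>v u i)" by (rule vsum_cong) (simp add: c_def)
    also have "\<dots> = w" using cf_rep[OF B w] by simp
    finally show "(\<forall>i>d. c i = 0) \<and> w = vsum d (\<lambda>i. c i \<cdot>\<^sub>v u (d - i))" unfolding c_def by simp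
  next
    fix c' assume c': "(\<forall>i>d. c' i = 0) \<and> w = vsum d (\<lambda>i. c' i \<cdot>\<^sub>v u (d - i))"
    then have "w = vsum d (\<lambda>i. c' (d - i) \<cdot>\<^sub>v u i)" using vsum_rev_smult by metis
    then have e: "\<And>i. i \<le> d \<Longrightarrow> cf d u w i = c' (d - i)" by (rule cf_eq[OF B])
    show "c' = c"
    proof
      fix j show "c' j = c j"
      proof (cases "j \<le> d")
        case True
        then have "d - (d - j) = j" by simp
        then show ?thesis using e[of "d - j"] True unfolding c_def by simp
      next
        case False then show ?thesis using c' unfolding c_def by simp
      qed
    qed
  qed
qed

lemma cf_rev: assumes B: "is_basis d u" and w: "w \<in> carrier_vec (Suc d)" and j: "j \<le> d"
  shows "cf d (\<lambda>j. u (d - j)) w j = cf d u w (d - j)"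
proof -
  have "vsum d (\<lambda>i. cf d u w (d - i) \<cdot>\<^sub>v u (d - i)) = vsum d (\<lambda>i. cf d u w (d - (d - i)) \<cdot>\<^sub>v u i)"
    by (rule vsum_rev_smult)
  also have "\<dots> = vsum d (\<lambda>i. cf d u w i \<cdot>\<^sub>v u i)" by (rule vsum_cong) simp
  also have "\<dots> = w" using cf_rep[OF B w] by simp
  finally have "w = vsum d (\<lambda>i. cf d u w (d - i) \<cdot>\<^sub>v u (d - i))" by simp
  from cf_eq[OF basis_rev[OF B] this j] show ?thesis .
qed

lemma basis_decomp: assumes B: "is_basis d y"
  shows "is_decomp d (\<lambda>j. if j \<le> d then span1 (y j) else {})"
  unfolding is_decomp_def
proof (intro conjI allI impI ballI)
  fix i assume i: "i \<le> d"
  show "\<exists>v\<in>carrier_vec (Suc d). v \<noteq> 0\<^sub>v (Suc d) \<and> (if i \<le> d then span1 (y i) else {}) = {c \<cdot>\<^sub>v v |c. True}"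
    using i basis_carrier[OF B i] basis_nonzero[OF B i] unfolding span1_def by auto
next
  fix i :: nat assume "d < i" then show "(if i \<le> d then span1 (y i) else {}) = {}" by simp
next
  fix w :: "'a vec" assume w: "w \<in> carrier_vec (Suc d)"
  define comp where "comp = (\<lambda>j. if j \<le> d then cf d y w j \<cdot>\<^sub>v y j else 0\<^sub>v (Suc d))"
  show "\<exists>!u. (\<forall>i\<le>d. u i \<in> (if i \<le> d then span1 (y i) else {})) \<and> (\<forall>i>d. u i = 0\<^sub>v (Suc d)) \<and> w = vsum d u"
  proof (rule ex1I[of _ comp])
    have "vsum d comp = vsum d (\<lambda>i. cf d y w i \<cdot>\<^sub>v y i)" by (rule vsum_cong) (simp add: comp_def)
    then show "(\<forall>i\<le>d. comp i \<in> (if i \<le> d then span1 (y i) else {})) \<and> (\<forall>i>d. comp i = 0\<^sub>v (Suc d)) \<and> w = vsum d comp"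
      using cf_rep[OF B w] span1_smult unfolding comp_def by auto
  next
    fix comp' assume h: "(\<forall>i\<le>d. comp' i \<in> (if i \<le> d then span1 (y i) else {})) \<and> (\<forall>i>d. comp' i = 0\<^sub>v (Suc d)) \<and> w = vsum d comp'"
    define c where "c = (\<lambda>i. SOME a. comp' i = a \<cdot>\<^sub>v y i)"
    have cc: "\<And>i. i \<le> d \<Longrightarrow> comp' i = c i \<cdot>\<^sub>v y i"
    proof -
      fix i assume i: "i \<le> d"
      then have "comp' i \<in> span1 (y i)" using h by simp
      then have "\<exists>a. comp' i = a \<cdot>\<^sub>v y i" by (rule span1_D)
      then show "comp' i = c i \<cdot>\<^sub>v y i" unfolding c_def by (rule someI_ex)
    qed
    have "vsum d comp' = vsum d (\<lambda>i. c i \<cdot>\<^sub>v y i)" by (rule vsum_cong) (rule cc)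
    then have "w = vsum d (\<lambda>i. c i \<cdot>\<^sub>v y i)" using h by simp
    then have ce: "\<And>i. i \<le> d \<Longrightarrow> cf d y w i = c i" by (rule cf_eq[OF B])
    show "comp' = comp"
    proof
      fix i show "comp' i = comp i"
      proof (cases "i \<le> d")
        case True then show ?thesis using cc[OF True] ce[OF True] unfolding comp_def by simp
      next
        case False then show ?thesis using h unfolding comp_def by simp
      qed
    qed
  qed
qed

definition rev_dec :: "nat \<Rightarrow> (nat \<Rightarrow> 'a::field vec set) \<Rightarrow> nat \<Rightarrow> 'a vec set" where
  "rev_dec d Vs = (\<lambda>i. if i \<le> d then Vs (d - i) else {})"

lemma rev_decomp: assumes L: "lrb d X Y Vs u"
  shows "is_decomp d (rev_dec d Vs)" "lowers d Y (rev_dec d Vs)" "raises d X (rev_dec d Vs)"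
proof -
  have "rev_dec d Vs = (\<lambda>j. if j \<le> d then span1 (u (d - j)) else {})"
    unfolding rev_dec_def by (rule ext) (simp add: lrbD(8)[OF L])
  then show "is_decomp d (rev_dec d Vs)" using basis_decomp[OF basis_rev[OF lrbD(6)[OF L]]] by simp
  have lv: "\<forall>i. 1 \<le> i \<and> i \<le> d \<longrightarrow> (\<lambda>v. X *\<^sub>v v) ` Vs i = Vs (i - 1)" "(\<lambda>v. X *\<^sub>v v) ` Vs 0 = {0\<^sub>v (Suc d)}"
    using lrbD(4)[OF L] unfolding lowers_def by blast+
  have rv: "\<forall>i<d. (\<lambda>v. Y *\<^sub>v v) ` Vs i = Vs (Suc i)" "(\<lambda>v. Y *\<^sub>v v) ` Vs d = {0\<^sub>v (Suc d)}"
    using lrbD(5)[OF L] unfolding raises_def by blast+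
  show "lowers d Y (rev_dec d Vs)" unfolding lowers_def
  proof (intro conjI allI impI)
    fix i assume i: "1 \<le> i \<and> i \<le> d"
    then have e: "rev_dec d Vs i = Vs (d - i)" "rev_dec d Vs (i - 1) = Vs (Suc (d - i))" "d - i < d"
      unfolding rev_dec_def by (auto simp: Suc_diff_le)
    then show "(\<lambda>v. Y *\<^sub>v v) ` rev_dec d Vs i = rev_dec d Vs (i - 1)"
      using rv(1) by simp
  next
    show "(\<lambda>v. Y *\<^sub>v v) ` rev_dec d Vs 0 = {0\<^sub>v (Suc d)}" using rv(2) unfolding rev_dec_def by simp
  qed
  show "raises d X (rev_dec d Vs)" unfolding raises_def
  proof (intro conjI allI impI)
    fix i assume i: "i < d"
    then have e: "rev_dec d Vs i = Vs (d - i)" "rev_dec d Vs (Suc i) = Vs (d - i - 1)" "1 \<le> d - i" "d - i \<le> d"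
      unfolding rev_dec_def by auto
    then show "(\<lambda>v. X *\<^sub>v v) ` rev_dec d Vs i = rev_dec d Vs (Suc i)"
      using lv(1) by simp
  next
    show "(\<lambda>v. X *\<^sub>v v) ` rev_dec d Vs d = {0\<^sub>v (Suc d)}" using lv(2) unfolding rev_dec_def by simp
  qed
qed

lemma lrb_K2: assumes L: "lrb d X Y Vs u" and z: "z \<in> carrier_vec (Suc d)"
  and h: "X *\<^sub>v (Y *\<^sub>v z) = 0\<^sub>v (Suc d)"
  shows "Y *\<^sub>v z = 0\<^sub>v (Suc d)"
proof -
  note B = lrbD(6)[OF L] and Xc = lrbD(1)[OF L] and Yc = lrbD(2)[OF L] and uc = lrb_carrier[OF L]
  have ex: "\<And>i. i \<le> d \<Longrightarrow> \<exists>p. X *\<^sub>v (Y *\<^sub>v u i) = p \<cdot>\<^sub>v u i \<and> (p = 0 \<longrightarrow> Y *\<^sub>v u i = 0\<^sub>v (Suc d))"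
  proof -
    fix i assume i: "i \<le> d"
    show "\<exists>p. X *\<^sub>v (Y *\<^sub>v u i) = p \<cdot>\<^sub>v u i \<and> (p = 0 \<longrightarrow> Y *\<^sub>v u i = 0\<^sub>v (Suc d))"
    proof (cases "i < d")
      case True
      obtain b where b: "b \<noteq> 0" "Y *\<^sub>v u i = b \<cdot>\<^sub>v u (Suc i)" using lrb_raise[OF L True] by blast
      have "X *\<^sub>v (Y *\<^sub>v u i) = b \<cdot>\<^sub>v (X *\<^sub>v u (Suc i))" using b(2) mult_mat_vec[OF Xc uc[of "Suc i"]] True by simp
      also have "\<dots> = b \<cdot>\<^sub>v u i" using lrbD(9)[OF L, of "Suc i"] True by simp
      finally show ?thesis using b(1) by blast
    next
      case False
      then have "i = d" using i by simp
      then have "Y *\<^sub>v u i = 0\<^sub>v (Suc d)" using lrb_raise_top[OF L] by simp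
      moreover have "X *\<^sub>v 0\<^sub>v (Suc d) = 0 \<cdot>\<^sub>v u i" using mult_zero_vec'[OF Xc] zero_smult_carrier[OF uc[OF i]] by simp
      ultimately show ?thesis by auto
    qed
  qed
  define p where "p = (\<lambda>i. SOME p. X *\<^sub>v (Y *\<^sub>v u i) = p \<cdot>\<^sub>v u i \<and> (p = 0 \<longrightarrow> Y *\<^sub>v u i = 0\<^sub>v (Suc d)))"
  have pp: "\<And>i. i \<le> d \<Longrightarrow> X *\<^sub>v (Y *\<^sub>v u i) = p i \<cdot>\<^sub>v u i \<and> (p i = 0 \<longrightarrow> Y *\<^sub>v u i = 0\<^sub>v (Suc d))"
    unfolding p_def by (rule someI_ex, rule ex)
  define c where "c = cf d u z"
  have zr: "z = vsum d (\<lambda>i. c i \<cdot>\<^sub>v u i)" using cf_rep[OF B z] unfolding c_def .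
  have Yz: "Y *\<^sub>v z = vsum d (\<lambda>i. c i \<cdot>\<^sub>v (Y *\<^sub>v u i))" unfolding zr by (rule mult_vsum_smult[OF Yc uc])
  have "X *\<^sub>v (Y *\<^sub>v z) = vsum d (\<lambda>i. c i \<cdot>\<^sub>v (X *\<^sub>v (Y *\<^sub>v u i)))"
    unfolding Yz by (rule mult_vsum_smult[OF Xc]) (use Yc uc mult_carrier in blast)
  also have "\<dots> = vsum d (\<lambda>i. (c i * p i) \<cdot>\<^sub>v u i)"
    by (rule vsum_cong) (use pp smult_smult_assoc in auto)
  finally have "0\<^sub>v (Suc d) = vsum d (\<lambda>i. (c i * p i) \<cdot>\<^sub>v u i)" using h by simp
  then have cp: "\<And>i. i \<le> d \<Longrightarrow> c i * p i = 0"
  proof -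
    fix i assume i: "i \<le> d"
    assume e: "0\<^sub>v (Suc d) = vsum d (\<lambda>i. (c i * p i) \<cdot>\<^sub>v u i)"
    have "cf d u (0\<^sub>v (Suc d)) i = c i * p i" by (rule cf_eq[OF B e i])
    then show "c i * p i = 0" using cf_zero[OF B i] by simp
  qed
  have "Y *\<^sub>v z = vsum d (\<lambda>i. 0\<^sub>v (Suc d))"
    unfolding Yz
  proof (rule vsum_cong)
    fix i assume i: "i \<le> d"
    show "c i \<cdot>\<^sub>v (Y *\<^sub>v u i) = 0\<^sub>v (Suc d)"
    proof (cases "c i = 0")
      case True then show ?thesis using zero_smult_carrier[OF mult_carrier[OF Yc]] by simp
    next
      case False
      then have "Y *\<^sub>v u i = 0\<^sub>v (Suc d)" using cp[OF i] pp[OF i] by simp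
      then show ?thesis by (intro eq_vecI) auto
    qed
  qed
  also have "\<dots> = 0\<^sub>v (Suc d)" by (rule vsum_zero) simp
  finally show ?thesis .
qed

lemma lrb_K1: assumes L: "lrb d X Y Vs u" and z: "z \<in> carrier_vec (Suc d)"
  shows "\<exists>z'\<in>carrier_vec (Suc d). X *\<^sub>v (Y *\<^sub>v (Y *\<^sub>v z)) = Y *\<^sub>v z'"
proof -
  note B = lrbD(6)[OF L] and Xc = lrbD(1)[OF L] and Yc = lrbD(2)[OF L] and uc = lrb_carrier[OF L]
  have Y0: "Y *\<^sub>v 0\<^sub>v (Suc d) = 0\<^sub>v (Suc d)" "X *\<^sub>v 0\<^sub>v (Suc d) = 0\<^sub>v (Suc d)"
    using mult_zero_vec' Xc Yc by auto
  have ex: "\<And>i. i \<le> d \<Longrightarrow> \<exists>y. y \<in> carrier_vec (Suc d) \<and> X *\<^sub>v (Y *\<^sub>v (Y *\<^sub>v u i)) = Y *\<^sub>v y"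
  proof -
    fix i assume i: "i \<le> d"
    show "\<exists>y. y \<in> carrier_vec (Suc d) \<and> X *\<^sub>v (Y *\<^sub>v (Y *\<^sub>v u i)) = Y *\<^sub>v y"
    proof (cases "Suc (Suc i) \<le> d")
      case True
      obtain b where b: "Y *\<^sub>v u i = b \<cdot>\<^sub>v u (Suc i)" using lrb_raise[OF L, of i] True by auto
      obtain b' where b': "Y *\<^sub>v u (Suc i) = b' \<cdot>\<^sub>v u (Suc (Suc i))" using lrb_raise[OF L, of "Suc i"] True by auto
      have "X *\<^sub>v (Y *\<^sub>v (Y *\<^sub>v u i)) = X *\<^sub>v (Y *\<^sub>v (b \<cdot>\<^sub>v u (Suc i)))" using b by simp
      also have "\<dots> = X *\<^sub>v (b \<cdot>\<^sub>v (b' \<cdot>\<^sub>v u (Suc (Suc i))))"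
        using mult_mat_vec[OF Yc uc[of "Suc i"]] b' True by simp
      also have "\<dots> = (b * b') \<cdot>\<^sub>v (X *\<^sub>v u (Suc (Suc i)))"
        using mult_mat_vec[OF Xc uc[of "Suc (Suc i)"]] True by (simp add: smult_smult_assoc)
      also have "\<dots> = (b * b') \<cdot>\<^sub>v u (Suc i)" using lrbD(9)[OF L, of "Suc (Suc i)"] True by simp
      also have "\<dots> = Y *\<^sub>v (b' \<cdot>\<^sub>v u i)"
        using mult_mat_vec[OF Yc uc[of i]] b True by (simp add: smult_smult_assoc mult.commute)
      finally show ?thesis using uc[of i] True by (intro exI[of _ "b' \<cdot>\<^sub>v u i"]) auto
    next
      case False
      have "Y *\<^sub>v (Y *\<^sub>v u i) = 0\<^sub>v (Suc d)"
      proof (cases "i = d")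
        case True then show ?thesis using lrb_raise_top[OF L] Y0 by simp
      next
        case False
        then have "Suc i = d" "i < d" using i \<open>\<not> Suc (Suc i) \<le> d\<close> by auto
        obtain b where b: "Y *\<^sub>v u i = b \<cdot>\<^sub>v u (Suc i)" using lrb_raise[OF L \<open>i < d\<close>] by auto
        have "Y *\<^sub>v (Y *\<^sub>v u i) = b \<cdot>\<^sub>v (Y *\<^sub>v u d)"
          using b mult_mat_vec[OF Yc uc[of d]] \<open>Suc i = d\<close> by simp
        also have "\<dots> = 0\<^sub>v (Suc d)" using lrb_raise_top[OF L] by (intro eq_vecI) auto
        finally show ?thesis .
      qed
      then show ?thesis using Y0 by (intro exI[of _ "0\<^sub>v (Suc d)"]) auto
    qed
  qed
  define y where "y = (\<lambda>i. SOME y. y \<in> carrier_vec (Suc d) \<and> X *\<^sub>v (Y *\<^sub>v (Y *\<^sub>v u i)) = Y *\<^sub>v y)"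
  have yy: "\<And>i. i \<le> d \<Longrightarrow> y i \<in> carrier_vec (Suc d) \<and> X *\<^sub>v (Y *\<^sub>v (Y *\<^sub>v u i)) = Y *\<^sub>v y i"
    unfolding y_def by (rule someI_ex, rule ex)
  define c where "c = cf d u z"
  have zr: "z = vsum d (\<lambda>i. c i \<cdot>\<^sub>v u i)" using cf_rep[OF B z] unfolding c_def .
  have "X *\<^sub>v (Y *\<^sub>v (Y *\<^sub>v z)) = vsum d (\<lambda>i. c i \<cdot>\<^sub>v (X *\<^sub>v (Y *\<^sub>v (Y *\<^sub>v u i))))"
  proof -
    have "Y *\<^sub>v z = vsum d (\<lambda>i. c i \<cdot>\<^sub>v (Y *\<^sub>v u i))" unfolding zr by (rule mult_vsum_smult[OF Yc uc])
    then have "Y *\<^sub>v (Y *\<^sub>v z) = vsum d (\<lambda>i. c i \<cdot>\<^sub>v (Y *\<^sub>v (Y *\<^sub>v u i)))"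
      using mult_vsum_smult[OF Yc, of "\<lambda>i. Y *\<^sub>v u i" c] mult_carrier[OF Yc] by simp
    then show ?thesis
      using mult_vsum_smult[OF Xc, of "\<lambda>i. Y *\<^sub>v (Y *\<^sub>v u i)" c] mult_carrier[OF Yc] by simp
  qed
  also have "\<dots> = vsum d (\<lambda>i. c i \<cdot>\<^sub>v (Y *\<^sub>v y i))" by (rule vsum_cong) (use yy in simp)
  also have "\<dots> = Y *\<^sub>v vsum d (\<lambda>i. c i \<cdot>\<^sub>v y i)" by (rule mult_vsum_smult[OF Yc, symmetric]) (use yy in simp)
  finally show ?thesis by auto
qed



section \<open>trace of M times a projection\<close>

lemma component_basis: assumes B: "is_basis d y" and Ws: "\<And>j. j \<le> d \<Longrightarrow> Ws j = span1 (y j)"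
  and Wh: "\<And>j. j > d \<Longrightarrow> Ws j = {}" and x: "x \<in> carrier_vec (Suc d)" and i: "i \<le> d"
  shows "component d Ws i x = cf d y x i \<cdot>\<^sub>v y i"
proof -
  have WW: "Ws = (\<lambda>j. if j \<le> d then span1 (y j) else {})" using Ws Wh by (intro ext) auto
  have dec: "is_decomp d Ws" unfolding WW by (rule basis_decomp[OF B])
  have ex1: "\<exists>!u. (\<forall>j\<le>d. u j \<in> Ws j) \<and> (\<forall>j>d. u j = 0\<^sub>v (Suc d)) \<and> x = vsum d u"
    using dec x unfolding is_decomp_def by blast
  define comp where "comp = (\<lambda>j. if j \<le> d then cf d y x j \<cdot>\<^sub>v y j else 0\<^sub>v (Suc d))"
  have "vsum d comp = vsum d (\<lambda>j. cf d y x j \<cdot>\<^sub>v y j)" by (rule vsum_cong) (simp add: comp_def)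
  then have P: "(\<forall>j\<le>d. comp j \<in> Ws j) \<and> (\<forall>j>d. comp j = 0\<^sub>v (Suc d)) \<and> x = vsum d comp"
    using cf_rep[OF B x] Ws span1_smult unfolding comp_def by auto
  have "(THE u. (\<forall>j\<le>d. u j \<in> Ws j) \<and> (\<forall>j>d. u j = 0\<^sub>v (Suc d)) \<and> x = vsum d u) = comp"
  proof (rule the_equality)
    show "(\<forall>j\<le>d. comp j \<in> Ws j) \<and> (\<forall>j>d. comp j = 0\<^sub>v (Suc d)) \<and> x = vsum d comp" by (rule P)
  next
    fix u assume U: "(\<forall>j\<le>d. u j \<in> Ws j) \<and> (\<forall>j>d. u j = 0\<^sub>v (Suc d)) \<and> x = vsum d u"
    show "u = comp" using ex1
    proof (rule ex1E)
      fix z assume "\<forall>y. ((\<forall>j\<le>d. y j \<in> Ws j) \<and> (\<forall>j>d. y j = 0\<^sub>v (Suc d)) \<and> x = vsum d y) \<longrightarrow> y = z"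
      then have "u = z" "comp = z" using U P by blast+
      then show "u = comp" by simp
    qed
  qed
  then show ?thesis unfolding component_def comp_def using i by simp
qed

lemma trace_proj: assumes B: "is_basis d y" and Ws: "\<And>j. j \<le> d \<Longrightarrow> Ws j = span1 (y j)"
  and Wh: "\<And>j. j > d \<Longrightarrow> Ws j = {}" and M: "M \<in> carrier_mat (Suc d) (Suc d)" and i: "i \<le> d"
  shows "mtrace (M * proj_mat d Ws i) = cf d y (M *\<^sub>v y i) i"
proof -
  define P where "P = proj_mat d Ws i"
  have yi: "y i \<in> carrier_vec (Suc d)" using basis_carrier[OF B i] .
  have ucar: "\<And>c. unit_vec (Suc d) c \<in> carrier_vec (Suc d)" by simp
  have Pent: "\<And>r c. r < Suc d \<Longrightarrow> c < Suc d \<Longrightarrow> P $$ (r, c) = cf d y (unit_vec (Suc d) c) i * y i $ r"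
    unfolding P_def proj_mat_def using component_basis[OF B Ws Wh ucar i] yi by simp
  have Pdim: "dim_row P = Suc d" "dim_col P = Suc d" unfolding P_def proj_mat_def by simp_all
  have diag: "\<And>r. r < Suc d \<Longrightarrow> (M * P) $$ (r, r) = cf d y (unit_vec (Suc d) r) i * (M *\<^sub>v y i) $ r"
  proof -
    fix r assume r: "r < Suc d"
    have "(M * P) $$ (r, r) = (\<Sum>k<Suc d. M $$ (r, k) * P $$ (k, r))"
      using M r Pdim by (simp add: scalar_prod_def atLeast0LessThan del: sum.lessThan_Suc)
    also have "\<dots> = (\<Sum>k<Suc d. cf d y (unit_vec (Suc d) r) i * (M $$ (r, k) * y i $ k))"
      by (rule sum.cong) (use Pent r in auto)
    also have "\<dots> = cf d y (unit_vec (Suc d) r) i * (M *\<^sub>v y i) $ r"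
      using M r yi by (simp add: scalar_prod_def atLeast0LessThan sum_distrib_left del: sum.lessThan_Suc)
    finally show "(M * P) $$ (r, r) = cf d y (unit_vec (Suc d) r) i * (M *\<^sub>v y i) $ r" .
  qed
  have dr: "dim_row (M * P) = Suc d" using M by simp
  have "mtrace (M * P) = (\<Sum>r<Suc d. (M * P) $$ (r, r))" unfolding mtrace_def dr by (rule refl)
  also have "\<dots> = (\<Sum>r<Suc d. cf d y (unit_vec (Suc d) r) i * (M *\<^sub>v y i) $ r)"
    by (rule sum.cong[OF refl]) (rule diag, simp)
  also have "\<dots> = (\<Sum>r\<le>d. (M *\<^sub>v y i) $ r * cf d y (unit_vec (Suc d) r) i)"
    by (simp add: lessThan_Suc_atMost mult.commute)
  also have "\<dots> = cf d y (vsum d (\<lambda>r. ((M *\<^sub>v y i) $ r) \<cdot>\<^sub>v unit_vec (Suc d) r)) i"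
    by (rule cf_lin[OF B _ i, symmetric]) simp
  also have "\<dots> = cf d y (M *\<^sub>v y i) i" using vsum_units[OF mult_carrier[OF M]] by simp
  finally show ?thesis unfolding P_def .
qed

section \<open>Jordan chains and transition matrices\<close>

definition jchain :: "nat \<Rightarrow> 'a::field mat \<Rightarrow> (nat \<Rightarrow> 'a vec) \<Rightarrow> bool" where
  "jchain d C u \<longleftrightarrow> is_basis d u \<and> (\<forall>i. 1 \<le> i \<and> i \<le> d \<longrightarrow> C *\<^sub>v u i = u (i - 1)) \<and> C *\<^sub>v u 0 = 0\<^sub>v (Suc d)"

lemma lrb_jchain: "lrb d X Y Vs u \<Longrightarrow> jchain d X u"
  unfolding jchain_def using lrbD(6,9) lrb_low0 by blast

lemma chain_cf: assumes J: "jchain d C u" and C: "C \<in> carrier_mat (Suc d) (Suc d)"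
  and x: "x \<in> carrier_vec (Suc d)" and j: "j \<le> d"
  shows "cf d u (C *\<^sub>v x) j = (if j < d then cf d u x (Suc j) else 0)"
proof -
  have B: "is_basis d u" using J unfolding jchain_def by blast
  have ch: "\<And>i. 1 \<le> i \<Longrightarrow> i \<le> d \<Longrightarrow> C *\<^sub>v u i = u (i - 1)" "C *\<^sub>v u 0 = 0\<^sub>v (Suc d)"
    using J unfolding jchain_def by blast+
  have cu: "\<And>i. i \<le> d \<Longrightarrow> cf d u (C *\<^sub>v u i) j = (if i = Suc j then 1 else 0)"
  proof -
    fix i assume i: "i \<le> d"
    show "cf d u (C *\<^sub>v u i) j = (if i = Suc j then 1 else 0)"
    proof (cases "i = 0")
      case True then show ?thesis using ch(2) cf_zero[OF B j] by simp
    next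
      case False
      then have "cf d u (C *\<^sub>v u i) j = cf d u (u (i - 1)) j" using ch(1)[of i] i by simp
      also have "\<dots> = (if j = i - 1 then 1 else 0)" using cf_basis[OF B _ j, of "i - 1"] i by simp
      finally show ?thesis using False by auto
    qed
  qed
  have "C *\<^sub>v x = C *\<^sub>v vsum d (\<lambda>i. cf d u x i \<cdot>\<^sub>v u i)" using cf_rep[OF B x] by simp
  also have "\<dots> = vsum d (\<lambda>i. cf d u x i \<cdot>\<^sub>v (C *\<^sub>v u i))"
    by (rule mult_vsum_smult[OF C basis_carrier[OF B]])
  finally have Cx: "C *\<^sub>v x = vsum d (\<lambda>i. cf d u x i \<cdot>\<^sub>v (C *\<^sub>v u i))" .
  have "cf d u (C *\<^sub>v x) j = (\<Sum>i\<le>d. cf d u x i * cf d u (C *\<^sub>v u i) j)"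
    unfolding Cx by (rule cf_lin[OF B _ j]) (rule mult_carrier[OF C])
  also have "\<dots> = (\<Sum>i\<le>d. if i = Suc j then cf d u x (Suc j) else 0)"
    by (rule sum.cong) (auto simp: cu)
  also have "\<dots> = (if j < d then cf d u x (Suc j) else 0)" by auto
  finally show ?thesis .
qed

lemma transition_cf: assumes B: "is_basis d u" and T: "is_transition d u w T" and i: "i \<le> d" and k: "k \<le> d"
  shows "T $$ (i, k) = cf d u (w k) i"
proof -
  have "w k = vsum d (\<lambda>i. T $$ (i, k) \<cdot>\<^sub>v u i)" using T k unfolding is_transition_def by blast
  from cf_eq[OF B this i] show ?thesis by simp
qed

lemma transition_exists: assumes Bu: "is_basis d u" and Bw: "is_basis d w"
  shows "is_transition d u w (mat (Suc d) (Suc d) (\<lambda>(i, k). cf d u (w k) i))"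
  unfolding is_transition_def
proof (intro conjI allI impI)
  fix k assume k: "k \<le> d"
  have "w k = vsum d (\<lambda>i. cf d u (w k) i \<cdot>\<^sub>v u i)" using cf_rep[OF Bu basis_carrier[OF Bw k]] .
  also have "\<dots> = vsum d (\<lambda>i. mat (Suc d) (Suc d) (\<lambda>(i, k). cf d u (w k) i) $$ (i, k) \<cdot>\<^sub>v u i)"
    by (rule vsum_cong) (use k in simp)
  finally show "w k = vsum d (\<lambda>i. mat (Suc d) (Suc d) (\<lambda>(i, k). cf d u (w k) i) $$ (i, k) \<cdot>\<^sub>v u i)" .
qed simp

lemma transition_toeplitz: assumes Ju: "jchain d C u" and Jw: "jchain d C w"
  and C: "C \<in> carrier_mat (Suc d) (Suc d)" and T: "is_transition d u w T"
  shows "toeplitz d T (\<lambda>j. T $$ (0, j))" "T $$ (0, 0) \<noteq> 0"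
proof -
  have Bu: "is_basis d u" using Ju unfolding jchain_def by blast
  have Bw: "is_basis d w" using Jw unfolding jchain_def by blast
  have chw: "\<And>i. 1 \<le> i \<Longrightarrow> i \<le> d \<Longrightarrow> C *\<^sub>v w i = w (i - 1)" "C *\<^sub>v w 0 = 0\<^sub>v (Suc d)"
    using Jw unfolding jchain_def by blast+
  have Tc: "\<And>i k. i \<le> d \<Longrightarrow> k \<le> d \<Longrightarrow> T $$ (i, k) = cf d u (w k) i"
    using transition_cf[OF Bu T] by blast
  have wc: "\<And>k. k \<le> d \<Longrightarrow> w k \<in> carrier_vec (Suc d)" using basis_carrier[OF Bw] .
  have sh: "\<And>i k. 1 \<le> i \<Longrightarrow> i \<le> d \<Longrightarrow> 1 \<le> k \<Longrightarrow> k \<le> d \<Longrightarrow> T $$ (i, k) = T $$ (i - 1, k - 1)"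
  proof -
    fix i k :: nat assume h: "1 \<le> i" "i \<le> d" "1 \<le> k" "k \<le> d"
    have "T $$ (i - 1, k - 1) = cf d u (w (k - 1)) (i - 1)" using Tc h by simp
    also have "\<dots> = cf d u (C *\<^sub>v w k) (i - 1)" using chw(1)[of k] h by simp
    also have "\<dots> = cf d u (w k) i" using chain_cf[OF Ju C wc[of k], of "i - 1"] h by simp
    finally show "T $$ (i, k) = T $$ (i - 1, k - 1)" using Tc h by simp
  qed
  have z0: "\<And>i. 1 \<le> i \<Longrightarrow> i \<le> d \<Longrightarrow> T $$ (i, 0) = 0"
  proof -
    fix i :: nat assume h: "1 \<le> i" "i \<le> d"
    have "0 = cf d u (C *\<^sub>v w 0) (i - 1)" using chw(2) cf_zero[OF Bu, of "i - 1"] h by simp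
    also have "\<dots> = cf d u (w 0) i" using chain_cf[OF Ju C wc[of 0], of "i - 1"] h by simp
    finally show "T $$ (i, 0) = 0" using Tc h by simp
  qed
  have main: "\<And>i. i \<le> d \<Longrightarrow> \<forall>k\<le>d. T $$ (i, k) = (if i \<le> k then T $$ (0, k - i) else 0)"
  proof -
    fix i show "i \<le> d \<Longrightarrow> \<forall>k\<le>d. T $$ (i, k) = (if i \<le> k then T $$ (0, k - i) else 0)"
    proof (induction i)
      case 0 then show ?case by simp
    next
      case (Suc i)
      show ?case
      proof (intro allI impI)
        fix k assume k: "k \<le> d"
        show "T $$ (Suc i, k) = (if Suc i \<le> k then T $$ (0, k - Suc i) else 0)"
        proof (cases "k = 0")
          case True then show ?thesis using z0[of "Suc i"] Suc.prems by simp
        next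
          case False
          then have "T $$ (Suc i, k) = T $$ (i, k - 1)" using sh[of "Suc i" k] Suc.prems k by simp
          also have "\<dots> = (if i \<le> k - 1 then T $$ (0, k - 1 - i) else 0)" using Suc k by simp
          finally show ?thesis using False by auto
        qed
      qed
    qed
  qed
  show "toeplitz d T (\<lambda>j. T $$ (0, j))" unfolding toeplitz_def using T main unfolding is_transition_def by blast
  show "T $$ (0, 0) \<noteq> 0"
  proof
    assume t0: "T $$ (0, 0) = 0"
    have "w 0 = vsum d (\<lambda>i. T $$ (i, 0) \<cdot>\<^sub>v u i)" using T unfolding is_transition_def by blast
    also have "\<dots> = vsum d (\<lambda>i. 0\<^sub>v (Suc d))"
    proof (rule vsum_cong)
      fix i assume i: "i \<le> d"
      have "T $$ (i, 0) = 0" using t0 z0[of i] i by (cases i) auto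
      then show "T $$ (i, 0) \<cdot>\<^sub>v u i = 0\<^sub>v (Suc d)" using basis_zero_smult[OF Bu i] by simp
    qed
    also have "\<dots> = 0\<^sub>v (Suc d)" by (rule vsum_zero) simp
    finally show False using basis_nonzero[OF Bw, of 0] by simp
  qed
qed

lemma transition_mult: assumes Bu: "is_basis d u" and Bw: "is_basis d w"
  and T: "is_transition d u w T" and T2: "is_transition d w u T2"
  shows "T * T2 = 1\<^sub>m (Suc d)"
proof (rule eq_matI)
  have Tc: "T \<in> carrier_mat (Suc d) (Suc d)" "T2 \<in> carrier_mat (Suc d) (Suc d)"
    using T T2 unfolding is_transition_def by blast+
  show "dim_row (T * T2) = dim_row (1\<^sub>m (Suc d))" "dim_col (T * T2) = dim_col (1\<^sub>m (Suc d))" using Tc by auto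
  fix i j assume "i < dim_row (1\<^sub>m (Suc d))" "j < dim_col (1\<^sub>m (Suc d))"
  then have i: "i \<le> d" and j: "j \<le> d" by auto
  have "u j = vsum d (\<lambda>k. T2 $$ (k, j) \<cdot>\<^sub>v w k)" using T2 j unfolding is_transition_def by blast
  also have "\<dots> = vsum d (\<lambda>k. T2 $$ (k, j) \<cdot>\<^sub>v vsum d (\<lambda>i. T $$ (i, k) \<cdot>\<^sub>v u i))"
    by (rule vsum_cong) (use T in \<open>simp add: is_transition_def\<close>)
  also have "\<dots> = vsum d (\<lambda>i. (\<Sum>k\<le>d. T2 $$ (k, j) * T $$ (i, k)) \<cdot>\<^sub>v u i)"
    by (rule vsum_double) (rule basis_carrier[OF Bu])
  finally have "cf d u (u j) i = (\<Sum>k\<le>d. T2 $$ (k, j) * T $$ (i, k))" by (rule cf_eq[OF Bu _ i])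
  then have e: "(\<Sum>k\<le>d. T $$ (i, k) * T2 $$ (k, j)) = (if i = j then 1 else 0)"
    using cf_basis[OF Bu j i] by (simp add: mult.commute)
  have "(T * T2) $$ (i, j) = (\<Sum>k<Suc d. T $$ (i, k) * T2 $$ (k, j))"
    using Tc i j by (simp add: scalar_prod_def atLeast0LessThan del: sum.lessThan_Suc)
  then show "(T * T2) $$ (i, j) = 1\<^sub>m (Suc d) $$ (i, j)" using e i j by (simp add: lessThan_Suc_atMost)
qed

lemma basis_scale: assumes B: "is_basis d u" and a: "a \<noteq> 0"
  shows "is_basis d (\<lambda>i. a \<cdot>\<^sub>v u i)"
  unfolding is_basis_def
proof (intro conjI allI impI ballI)
  fix i assume "i \<le> d" then show "a \<cdot>\<^sub>v u i \<in> carrier_vec (Suc d)" using basis_carrier[OF B] by simp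
next
  fix w :: "'a vec" assume w: "w \<in> carrier_vec (Suc d)"
  have eq: "\<And>c. vsum d (\<lambda>i. c i \<cdot>\<^sub>v (a \<cdot>\<^sub>v u i)) = vsum d (\<lambda>i. (c i * a) \<cdot>\<^sub>v u i)"
    by (rule vsum_cong) (simp add: smult_smult_assoc)
  define c where "c = (\<lambda>i. cf d u w i / a)"
  show "\<exists>!c. (\<forall>i>d. c i = 0) \<and> w = vsum d (\<lambda>i. c i \<cdot>\<^sub>v (a \<cdot>\<^sub>v u i))"
  proof (rule ex1I[of _ c])
    have "vsum d (\<lambda>i. (c i * a) \<cdot>\<^sub>v u i) = vsum d (\<lambda>i. cf d u w i \<cdot>\<^sub>v u i)"
      by (rule vsum_cong) (simp add: c_def a)
    then show "(\<forall>i>d. c i = 0) \<and> w = vsum d (\<lambda>i. c i \<cdot>\<^sub>v (a \<cdot>\<^sub>v u i))"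
      using cf_spec[OF B w] eq unfolding c_def by auto
  next
    fix c' assume c': "(\<forall>i>d. c' i = 0) \<and> w = vsum d (\<lambda>i. c' i \<cdot>\<^sub>v (a \<cdot>\<^sub>v u i))"
    then have "w = vsum d (\<lambda>i. (c' i * a) \<cdot>\<^sub>v u i)" using eq by simp
    then have e: "\<And>i. i \<le> d \<Longrightarrow> cf d u w i = c' i * a" by (rule cf_eq[OF B])
    show "c' = c"
    proof
      fix i show "c' i = c i"
      proof (cases "i \<le> d")
        case True then show ?thesis using e[OF True] a unfolding c_def by simp
      next
        case False then show ?thesis using c' cf_spec[OF B w] unfolding c_def by simp
      qed
    qed
  qed
qed

lemma lrb_scale: assumes L: "lrb d X Y Vs u" and a: "a \<noteq> 0"
  shows "lrb d X Y Vs (\<lambda>i. a \<cdot>\<^sub>v u i)"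
proof -
  have sp: "\<forall>i\<le>d. a \<cdot>\<^sub>v u i \<in> Vs i \<and> Vs i = span1 (a \<cdot>\<^sub>v u i)"
  proof (intro allI impI)
    fix i assume i: "i \<le> d"
    have m: "a \<cdot>\<^sub>v u i \<in> Vs i" using lrbD(8)[OF L i] span1_smult by simp
    have nz: "a \<cdot>\<^sub>v u i \<noteq> 0\<^sub>v (Suc d)"
      using smult_eq_zero_vecD[OF lrb_carrier[OF L i] _ a] lrb_nonzero[OF L i] by blast
    have "span1 (a \<cdot>\<^sub>v u i) = span1 (u i)" by (rule span1_same[OF lrb_carrier[OF L i] span1_smult nz])
    then show "a \<cdot>\<^sub>v u i \<in> Vs i \<and> Vs i = span1 (a \<cdot>\<^sub>v u i)" using m lrbD(8)[OF L i] by simp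
  qed
  have ch: "\<forall>i. 1 \<le> i \<and> i \<le> d \<longrightarrow> X *\<^sub>v (a \<cdot>\<^sub>v u i) = a \<cdot>\<^sub>v u (i - 1)"
  proof (intro allI impI)
    fix i assume i: "1 \<le> i \<and> i \<le> d"
    have "X *\<^sub>v (a \<cdot>\<^sub>v u i) = a \<cdot>\<^sub>v (X *\<^sub>v u i)" by (rule mult_mat_vec[OF lrbD(1)[OF L] lrb_carrier[OF L]]) (use i in simp)
    then show "X *\<^sub>v (a \<cdot>\<^sub>v u i) = a \<cdot>\<^sub>v u (i - 1)" using lrbD(9)[OF L] i by simp
  qed
  have bs: "is_basis d (\<lambda>i. a \<cdot>\<^sub>v u i)" by (rule basis_scale[OF lrbD(6)[OF L] a])
  show ?thesis unfolding lrb_def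
    using lrbD(1,2,3,4,5)[OF L] sp ch bs by (intro conjI)
qed

lemma lrb_unique: assumes L1: "lrb d X Y Vs u1" and L2: "lrb d X Y Vs u2"
  shows "\<exists>c. c \<noteq> 0 \<and> (\<forall>i\<le>d. u2 i = c \<cdot>\<^sub>v u1 i)"
proof -
  have "u2 d \<in> span1 (u1 d)" using lrbD(7)[OF L2, of d] lrbD(8)[OF L1, of d] by simp
  then obtain c where c: "u2 d = c \<cdot>\<^sub>v u1 d" using span1_D by blast
  have c0: "c \<noteq> 0"
  proof
    assume "c = 0" then have "u2 d = 0\<^sub>v (Suc d)" using c zero_smult_carrier[OF lrb_carrier[OF L1, of d]] by simp
    then show False using lrb_nonzero[OF L2, of d] by simp
  qed
  have m: "\<And>m. m \<le> d \<Longrightarrow> u2 (d - m) = c \<cdot>\<^sub>v u1 (d - m)"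
  proof -
    fix m show "m \<le> d \<Longrightarrow> u2 (d - m) = c \<cdot>\<^sub>v u1 (d - m)"
    proof (induction m)
      case 0 then show ?case using c by simp
    next
      case (Suc m)
      have i: "1 \<le> d - m" "d - m \<le> d" "d - m - 1 = d - Suc m" using Suc.prems by auto
      have "u2 (d - Suc m) = X *\<^sub>v u2 (d - m)" using lrbD(9)[OF L2 i(1,2)] i(3) by simp
      also have "\<dots> = c \<cdot>\<^sub>v (X *\<^sub>v u1 (d - m))"
        using Suc mult_mat_vec[OF lrbD(1)[OF L1] lrb_carrier[OF L1 i(2)]] by simp
      also have "\<dots> = c \<cdot>\<^sub>v u1 (d - Suc m)" using lrbD(9)[OF L1 i(1,2)] i(3) by simp
      finally show ?case .
    qed
  qed
  have "\<forall>i\<le>d. u2 i = c \<cdot>\<^sub>v u1 i"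
  proof (intro allI impI)
    fix i assume "i \<le> d" then have "d - (d - i) = i" by simp
    then show "u2 i = c \<cdot>\<^sub>v u1 i" using m[of "d - i"] by simp
  qed
  then show ?thesis using c0 by blast
qed



section \<open>the core recurrence\<close>

lemma core:
  fixes M :: "'a::field mat"
  assumes B: "is_basis d u"
    and Wc: "\<And>k. k \<le> d \<Longrightarrow> w k \<in> carrier_vec (Suc d)"
    and Tr: "\<And>k. k \<le> d \<Longrightarrow> w k = vsum d (\<lambda>i. T $$ (i, k) \<cdot>\<^sub>v u i)"
    and Tp: "toeplitz d T g" and g0: "g 0 = 1"
    and M: "M \<in> carrier_mat (Suc d) (Suc d)"
    and h1: "cf d u (M *\<^sub>v u 0) 0 = 0"
    and h2: "\<And>i. 2 \<le> i \<Longrightarrow> i \<le> d \<Longrightarrow> cf d u (M *\<^sub>v u i) 0 = 0"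
    and h3: "\<And>k. k < d \<Longrightarrow> \<exists>a. a \<noteq> 0 \<and> M *\<^sub>v w k = a \<cdot>\<^sub>v w (Suc k)"
    and h4: "g d \<noteq> 0"
  shows "even d \<and> (\<forall>i\<le>d. (odd i \<longrightarrow> g i = 0) \<and> (even i \<longrightarrow> g i \<noteq> 0))"
proof -
  have Tent: "\<And>i k. i \<le> d \<Longrightarrow> k \<le> d \<Longrightarrow> T $$ (i, k) = (if i \<le> k then g (k - i) else 0)"
    using Tp unfolding toeplitz_def by blast
  have uc: "\<And>i. i \<le> d \<Longrightarrow> u i \<in> carrier_vec (Suc d)" using basis_carrier[OF B] .
  have fw: "\<And>k. k \<le> d \<Longrightarrow> cf d u (w k) 0 = g k"
  proof -
    fix k assume k: "k \<le> d"
    have "cf d u (w k) 0 = T $$ (0, k)" using cf_eq[OF B Tr[OF k], of 0] by simp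
    then show "cf d u (w k) 0 = g k" using Tent[of 0 k] k by simp
  qed
  define p where "p = cf d u (M *\<^sub>v u 1) 0"
  have rec: "\<And>k. k < d \<Longrightarrow> \<exists>a. a \<noteq> 0 \<and> a * g (Suc k) = (if k = 0 then 0 else g (k - 1) * p)"
  proof -
    fix k assume k: "k < d"
    obtain a where a: "a \<noteq> 0" "M *\<^sub>v w k = a \<cdot>\<^sub>v w (Suc k)" using h3[OF k] by blast
    have "cf d u (M *\<^sub>v w k) 0 = a * g (Suc k)"
      using a(2) cf_smult[OF B Wc[of "Suc k"], of 0 a] fw[of "Suc k"] k by simp
    moreover have "M *\<^sub>v w k = vsum d (\<lambda>i. T $$ (i, k) \<cdot>\<^sub>v (M *\<^sub>v u i))"
      using Tr[of k] k mult_vsum_smult[OF M uc] by simp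
    then have "cf d u (M *\<^sub>v w k) 0 = (\<Sum>i\<le>d. T $$ (i, k) * cf d u (M *\<^sub>v u i) 0)"
      using cf_lin[OF B, of "\<lambda>i. M *\<^sub>v u i" 0 "\<lambda>i. T $$ (i, k)"] mult_carrier[OF M] by simp
    also have "\<dots> = (\<Sum>i\<le>d. if i = 1 then T $$ (1, k) * p else 0)"
    proof (rule sum.cong)
      fix i assume "i \<in> {..d}" then have i: "i \<le> d" by simp
      show "T $$ (i, k) * cf d u (M *\<^sub>v u i) 0 = (if i = 1 then T $$ (1, k) * p else 0)"
      proof (cases "i = 0")
        case True then show ?thesis using h1 by simp
      next
        case False
        show ?thesis
        proof (cases "i = 1")
          case True then show ?thesis unfolding p_def by simp
        next
          case False
          then show ?thesis using \<open>i \<noteq> 0\<close> h2[of i] i by simp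
        qed
      qed
    qed simp
    also have "\<dots> = T $$ (1, k) * p" using k by simp
    also have "\<dots> = (if k = 0 then 0 else g (k - 1) * p)" using Tent[of 1 k] k by simp
    finally show "\<exists>a. a \<noteq> 0 \<and> a * g (Suc k) = (if k = 0 then 0 else g (k - 1) * p)"
      using a(1) by metis
  qed
  have odd0: "\<And>m. 2 * m + 1 \<le> d \<Longrightarrow> g (2 * m + 1) = 0"
  proof -
    fix m show "2 * m + 1 \<le> d \<Longrightarrow> g (2 * m + 1) = 0"
    proof (induction m)
      case 0
      obtain a where "a \<noteq> 0" "a * g (Suc 0) = 0" using rec[of 0] 0 by auto
      then show ?case by simp
    next
      case (Suc m)
      have k: "2 * m + 2 < d" using Suc.prems by simp
      obtain a where a: "a \<noteq> 0" "a * g (Suc (2 * m + 2)) = g (2 * m + 1) * p"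
        using rec[OF k] by auto
      have "g (2 * m + 1) = 0" using Suc by simp
      then show ?case using a by simp
    qed
  qed
  have ev: "even d"
  proof (rule ccontr)
    assume "odd d"
    then obtain m where "d = 2 * m + 1" by (metis oddE)
    then show False using odd0[of m] h4 by simp
  qed
  have pnz: "2 \<le> d \<Longrightarrow> p \<noteq> 0"
  proof
    assume d2: "2 \<le> d" and p0: "p = 0"
    have k: "d - 1 < d" "d - 1 \<noteq> 0" using d2 by auto
    obtain a where a: "a \<noteq> 0" "a * g (Suc (d - 1)) = g (d - 1 - 1) * p"
      using rec[OF k(1)] k(2) by auto
    then have "g (Suc (d - 1)) = 0" using p0 by simp
    then show False using h4 d2 by simp
  qed
  have even0: "\<And>m. 2 * m \<le> d \<Longrightarrow> g (2 * m) \<noteq> 0"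
  proof -
    fix m show "2 * m \<le> d \<Longrightarrow> g (2 * m) \<noteq> 0"
    proof (induction m)
      case 0 then show ?case using g0 by simp
    next
      case (Suc m)
      have k: "2 * m + 1 < d" using Suc.prems by simp
      obtain a where a: "a \<noteq> 0" "a * g (Suc (2 * m + 1)) = g (2 * m) * p"
        using rec[OF k] by auto
      have "g (2 * m) \<noteq> 0" using Suc by simp
      moreover have "p \<noteq> 0" using pnz Suc.prems by simp
      ultimately have "g (Suc (2 * m + 1)) \<noteq> 0" using a by auto
      then show ?case by simp
    qed
  qed
  show ?thesis
  proof (intro conjI allI impI)
    show "even d" by (rule ev)
  next
    fix i assume "i \<le> d" "odd i"
    then obtain m where "i = 2 * m + 1" by (metis oddE)
    then show "g i = 0" using odd0 \<open>i \<le> d\<close> by simp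
  next
    fix i assume "i \<le> d" "even i"
    then obtain m where "i = 2 * m" by (metis evenE)
    then show "g i \<noteq> 0" using even0 \<open>i \<le> d\<close> by simp
  qed
qed



lemma raise_pre: assumes L: "lrb d C Y Vs u" and i: "1 \<le> i" "i \<le> d"
  shows "\<exists>y\<in>carrier_vec (Suc d). u i = Y *\<^sub>v y"
proof -
  have k: "i - 1 < d" "Suc (i - 1) = i" using i by auto
  obtain b where b: "b \<noteq> 0" "Y *\<^sub>v u (i - 1) = b \<cdot>\<^sub>v u i" using lrb_raise[OF L k(1)] k(2) by auto
  have "Y *\<^sub>v ((1 / b) \<cdot>\<^sub>v u (i - 1)) = (1 / b) \<cdot>\<^sub>v (Y *\<^sub>v u (i - 1))"
    by (rule mult_mat_vec[OF lrbD(2)[OF L] lrb_carrier[OF L]]) (use i in simp)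
  also have "\<dots> = u i" using b by (simp add: smult_smult_assoc)
  finally show ?thesis using lrb_carrier[OF L, of "i - 1"] i by (intro bexI[of _ "(1 / b) \<cdot>\<^sub>v u (i - 1)"]) auto
qed

lemma raise_cf0: assumes L: "lrb d C Y Vs u" and z: "z \<in> carrier_vec (Suc d)"
  shows "cf d u (Y *\<^sub>v z) 0 = 0"
proof -
  note B = lrbD(6)[OF L] and Yc = lrbD(2)[OF L]
  have "Y *\<^sub>v z = Y *\<^sub>v vsum d (\<lambda>i. cf d u z i \<cdot>\<^sub>v u i)" using cf_rep[OF B z] by simp
  also have "\<dots> = vsum d (\<lambda>i. cf d u z i \<cdot>\<^sub>v (Y *\<^sub>v u i))"
    by (rule mult_vsum_smult[OF Yc lrb_carrier[OF L]])
  finally have Yz: "Y *\<^sub>v z = vsum d (\<lambda>i. cf d u z i \<cdot>\<^sub>v (Y *\<^sub>v u i))" .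
  have "cf d u (Y *\<^sub>v z) 0 = (\<Sum>i\<le>d. cf d u z i * cf d u (Y *\<^sub>v u i) 0)"
    unfolding Yz by (rule cf_lin[OF B _]) (auto intro: mult_carrier[OF Yc])
  also have "\<dots> = (\<Sum>i\<le>d. 0)"
  proof (rule sum.cong)
    fix i assume "i \<in> {..d}" then have i: "i \<le> d" by simp
    show "cf d u z i * cf d u (Y *\<^sub>v u i) 0 = 0"
    proof (cases "i < d")
      case True
      obtain b where b: "Y *\<^sub>v u i = b \<cdot>\<^sub>v u (Suc i)" using lrb_raise[OF L True] by auto
      have "cf d u (Y *\<^sub>v u i) 0 = b * cf d u (u (Suc i)) 0"
        using b cf_smult[OF B lrb_carrier[OF L, of "Suc i"], of 0 b] True by simp
      also have "\<dots> = 0" using cf_basis[OF B, of "Suc i" 0] True by simp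
      finally show ?thesis by simp
    next
      case False then have "i = d" using i by simp
      then show ?thesis using lrb_raise_top[OF L] cf_zero[OF B, of 0] by simp
    qed
  qed simp
  finally show ?thesis by simp
qed

lemma h2gen: assumes Lxy: "lrb d X Y Vs v" and Lu: "lrb d C Y Vu u" and i: "2 \<le> i" "i \<le> d"
  shows "cf d u (X *\<^sub>v u i) 0 = 0"
proof -
  have Xc: "X \<in> carrier_mat (Suc d) (Suc d)" and Yc: "Y \<in> carrier_mat (Suc d) (Suc d)"
    using lrbD(1,2)[OF Lxy] by auto
  obtain y1 where y1: "y1 \<in> carrier_vec (Suc d)" "u i = Y *\<^sub>v y1" using raise_pre[OF Lu, of i] i by auto
  have i1: "1 \<le> i - 1" "i - 1 \<le> d" using i by auto
  obtain y2 where y2: "y2 \<in> carrier_vec (Suc d)" "u (i - 1) = Y *\<^sub>v y2" using raise_pre[OF Lu i1] by blast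
  obtain b where b: "b \<noteq> 0" "Y *\<^sub>v u (i - 1) = b \<cdot>\<^sub>v u i"
  proof -
    have "i - 1 < d" "Suc (i - 1) = i" using i by auto
    then show "(\<And>b. b \<noteq> 0 \<Longrightarrow> Y *\<^sub>v u (i - 1) = b \<cdot>\<^sub>v u i \<Longrightarrow> thesis) \<Longrightarrow> thesis"
      using lrb_raise[OF Lu, of "i - 1"] by metis
  qed
  have "u i = (1 / b) \<cdot>\<^sub>v (Y *\<^sub>v u (i - 1))" using b by (simp add: smult_smult_assoc)
  also have "\<dots> = (1 / b) \<cdot>\<^sub>v (Y *\<^sub>v (Y *\<^sub>v y2))" using y2 by simp
  also have "\<dots> = Y *\<^sub>v (Y *\<^sub>v ((1 / b) \<cdot>\<^sub>v y2))"
    using mult_mat_vec[OF Yc y2(1)] mult_mat_vec[OF Yc mult_carrier[OF Yc]] by simp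
  finally have ui: "u i = Y *\<^sub>v (Y *\<^sub>v ((1 / b) \<cdot>\<^sub>v y2))" .
  obtain z where z: "z \<in> carrier_vec (Suc d)" "X *\<^sub>v (Y *\<^sub>v (Y *\<^sub>v ((1 / b) \<cdot>\<^sub>v y2))) = Y *\<^sub>v z"
    using lrb_K1[OF Lxy, of "(1 / b) \<cdot>\<^sub>v y2"] y2(1) by auto
  show ?thesis using ui z raise_cf0[OF Lu z(1)] by simp
qed

lemma h4gen: assumes Lxy: "lrb d X Y Vs v" and Lu: "lrb d C Y Vu u"
  and x: "x \<in> carrier_vec (Suc d)" "x \<noteq> 0\<^sub>v (Suc d)" "X *\<^sub>v x = 0\<^sub>v (Suc d)"
  and xr: "x = vsum d (\<lambda>i. t i \<cdot>\<^sub>v u i)" and t0: "t 0 = 0"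
  shows False
proof -
  have Xc: "X \<in> carrier_mat (Suc d) (Suc d)" and Yc: "Y \<in> carrier_mat (Suc d) (Suc d)"
    using lrbD(1,2)[OF Lxy] by auto
  define y where "y = (\<lambda>i. if i = 0 then 0\<^sub>v (Suc d) else (SOME y. y \<in> carrier_vec (Suc d) \<and> u i = Y *\<^sub>v y))"
  have yy: "\<And>i. i \<le> d \<Longrightarrow> y i \<in> carrier_vec (Suc d) \<and> t i \<cdot>\<^sub>v u i = t i \<cdot>\<^sub>v (Y *\<^sub>v y i)"
  proof -
    fix i assume i: "i \<le> d"
    show "y i \<in> carrier_vec (Suc d) \<and> t i \<cdot>\<^sub>v u i = t i \<cdot>\<^sub>v (Y *\<^sub>v y i)"
    proof (cases "i = 0")
      case True
      have "t i \<cdot>\<^sub>v u i = 0\<^sub>v (Suc d)" using True t0 zero_smult_carrier[OF lrb_carrier[OF Lu i]] by simp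
      moreover have "t i \<cdot>\<^sub>v (Y *\<^sub>v y i) = 0\<^sub>v (Suc d)"
        using True t0 zero_smult_carrier[OF mult_carrier[OF Yc]] by simp
      ultimately show ?thesis using True unfolding y_def by simp
    next
      case False
      have "\<exists>y. y \<in> carrier_vec (Suc d) \<and> u i = Y *\<^sub>v y" using raise_pre[OF Lu, of i] False i by auto
      then have "(SOME y. y \<in> carrier_vec (Suc d) \<and> u i = Y *\<^sub>v y) \<in> carrier_vec (Suc d) \<and>
          u i = Y *\<^sub>v (SOME y. y \<in> carrier_vec (Suc d) \<and> u i = Y *\<^sub>v y)" by (rule someI_ex)
      then have "y i \<in> carrier_vec (Suc d) \<and> u i = Y *\<^sub>v y i" unfolding y_def using False by simp
      then show ?thesis by simp
    qed
  qed
  have "x = vsum d (\<lambda>i. t i \<cdot>\<^sub>v (Y *\<^sub>v y i))" unfolding xr by (rule vsum_cong) (use yy in blast)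
  also have "\<dots> = Y *\<^sub>v vsum d (\<lambda>i. t i \<cdot>\<^sub>v y i)" by (rule mult_vsum_smult[OF Yc, symmetric]) (use yy in blast)
  finally have xe: "x = Y *\<^sub>v vsum d (\<lambda>i. t i \<cdot>\<^sub>v y i)" .
  have "Y *\<^sub>v vsum d (\<lambda>i. t i \<cdot>\<^sub>v y i) = 0\<^sub>v (Suc d)"
    by (rule lrb_K2[OF Lxy]) (use x(3) xe in auto)
  then show False using xe x(2) by simp
qed

lemma LR_basis_lrb: assumes dec: "is_decomp d Vs" and low: "lowers d X Vs" and rai: "raises d Y Vs"
  and X: "X \<in> carrier_mat (Suc d) (Suc d)" and Y: "Y \<in> carrier_mat (Suc d) (Suc d)"
  and LB: "LR_basis d X Y u"
  shows "lrb d X Y Vs u"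
proof -
  have LD: "LR_decomp d X Y = Vs" by (rule LR_decomp_eq[OF dec low rai X Y])
  have B: "is_basis d u" and mem: "\<And>i. i \<le> d \<Longrightarrow> u i \<in> Vs i"
    and ch: "\<forall>i. 1 \<le> i \<and> i \<le> d \<longrightarrow> X *\<^sub>v u i = u (i - 1)"
    using LB LD unfolding LR_basis_def by auto
  have sp: "\<forall>i\<le>d. u i \<in> Vs i \<and> Vs i = span1 (u i)"
  proof (intro allI impI conjI)
    fix i assume i: "i \<le> d"
    show "u i \<in> Vs i" using mem[OF i] .
    obtain g where g: "g \<in> carrier_vec (Suc d)" "g \<noteq> 0\<^sub>v (Suc d)" "Vs i = span1 g"
      using decomp_gen[OF dec i] by blast
    have "span1 (u i) = span1 g" by (rule span1_same[OF g(1)]) (use mem[OF i] g(3) basis_nonzero[OF B i] in auto)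
    then show "Vs i = span1 (u i)" using g(3) by simp
  qed
  show ?thesis unfolding lrb_def using X Y dec low rai B sp ch by (intro conjI)
qed



lemma lrb_LR_basis: assumes L: "lrb d X Y Vs u" shows "LR_basis d X Y u"
proof -
  have "LR_decomp d X Y = Vs" by (rule LR_decomp_eq[OF lrbD(3,4,5,1,2)[OF L]])
  then show ?thesis unfolding LR_basis_def using lrbD(6,7,9)[OF L] by auto
qed

lemma tp_lrb: assumes L0: "lrb d X Y Vs u0" and LB: "LR_basis d X Y u" shows "lrb d X Y Vs u"
  by (rule LR_basis_lrb[OF lrbD(3,4,5,1,2)[OF L0] LB])

definition tp_ok where
  "tp_ok d C Y M u w T g \<longleftrightarrow> LR_basis d C Y u \<and> LR_basis d C M w \<and> is_transition d u w T \<and> toeplitz d T g \<and> g 0 = 1"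

lemma toeplitz_ent: "toeplitz d T g \<Longrightarrow> i \<le> d \<Longrightarrow> k \<le> d \<Longrightarrow> T $$ (i, k) = (if i \<le> k then g (k - i) else 0)"
  unfolding toeplitz_def by blast

lemma tp_unique: assumes Lu0: "lrb d C Y Vu u0" and Lw0: "lrb d C M Vw w0"
  and t1: "tp_ok d C Y M u1 w1 T1 g1" and t2: "tp_ok d C Y M u2 w2 T2 g2"
  shows "T1 = T2"
proof -
  have L1: "lrb d C Y Vu u1" "lrb d C M Vw w1" using tp_lrb[OF Lu0] tp_lrb[OF Lw0] t1 unfolding tp_ok_def by auto
  have L2: "lrb d C Y Vu u2" "lrb d C M Vw w2" using tp_lrb[OF Lu0] tp_lrb[OF Lw0] t2 unfolding tp_ok_def by auto
  obtain c where c: "c \<noteq> 0" "\<forall>i\<le>d. u2 i = c \<cdot>\<^sub>v u1 i" using lrb_unique[OF L1(1) L2(1)] by blast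
  obtain c' where c': "c' \<noteq> 0" "\<forall>i\<le>d. w2 i = c' \<cdot>\<^sub>v w1 i" using lrb_unique[OF L1(2) L2(2)] by blast
  have T1: "is_transition d u1 w1 T1" "toeplitz d T1 g1" "g1 0 = 1" using t1 unfolding tp_ok_def by auto
  have T2: "is_transition d u2 w2 T2" "toeplitz d T2 g2" "g2 0 = 1" using t2 unfolding tp_ok_def by auto
  have B1: "is_basis d u1" using lrbD(6)[OF L1(1)] .
  have key: "\<And>i k. i \<le> d \<Longrightarrow> k \<le> d \<Longrightarrow> c' * T1 $$ (i, k) = T2 $$ (i, k) * c"
  proof -
    fix i k assume i: "i \<le> d" and k: "k \<le> d"
    have "w2 k = c' \<cdot>\<^sub>v w1 k" using c' k by simp
    also have "\<dots> = c' \<cdot>\<^sub>v vsum d (\<lambda>i. T1 $$ (i, k) \<cdot>\<^sub>v u1 i)" using T1(1) k unfolding is_transition_def by simp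
    also have "\<dots> = vsum d (\<lambda>i. c' \<cdot>\<^sub>v (T1 $$ (i, k) \<cdot>\<^sub>v u1 i))"
      by (rule smult_vsum) (use lrb_carrier[OF L1(1)] in simp)
    also have "\<dots> = vsum d (\<lambda>i. (c' * T1 $$ (i, k)) \<cdot>\<^sub>v u1 i)" by (rule vsum_cong) (simp add: smult_smult_assoc)
    finally have "w2 k = vsum d (\<lambda>i. (c' * T1 $$ (i, k)) \<cdot>\<^sub>v u1 i)" .
    from cf_eq[OF B1 this i] have e1: "cf d u1 (w2 k) i = c' * T1 $$ (i, k)" by simp
    have "w2 k = vsum d (\<lambda>i. T2 $$ (i, k) \<cdot>\<^sub>v u2 i)" using T2(1) k unfolding is_transition_def by simp
    also have "\<dots> = vsum d (\<lambda>i. (T2 $$ (i, k) * c) \<cdot>\<^sub>v u1 i)"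
      by (rule vsum_cong) (use c in \<open>simp add: smult_smult_assoc\<close>)
    finally have "w2 k = vsum d (\<lambda>i. (T2 $$ (i, k) * c) \<cdot>\<^sub>v u1 i)" .
    from cf_eq[OF B1 this i] have e2: "cf d u1 (w2 k) i = T2 $$ (i, k) * c" by simp
    show "c' * T1 $$ (i, k) = T2 $$ (i, k) * c" using e1 e2 by simp
  qed
  have "T1 $$ (0, 0) = 1" "T2 $$ (0, 0) = 1" using toeplitz_ent[OF T1(2)] toeplitz_ent[OF T2(2)] T1(3) T2(3) by auto
  then have cc: "c' = c" using key[of 0 0] by simp
  have car: "T1 \<in> carrier_mat (Suc d) (Suc d)" "T2 \<in> carrier_mat (Suc d) (Suc d)"
    using T1(1) T2(1) unfolding is_transition_def by auto
  show "T1 = T2"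
  proof (rule eq_matI)
    fix i k assume "i < dim_row T2" "k < dim_col T2"
    then have "i \<le> d" "k \<le> d" using car by auto
    then show "T1 $$ (i, k) = T2 $$ (i, k)" using key[of i k] cc c(1) by (simp add: mult.commute)
  qed (use car in auto)
qed

lemma tp_exists: assumes Lu0: "lrb d C Y Vu u0" and Lw0: "lrb d C M Vw w0"
  shows "\<exists>u w T g. tp_ok d C Y M u w T g"
proof -
  have C: "C \<in> carrier_mat (Suc d) (Suc d)" using lrbD(1)[OF Lu0] .
  have Bu: "is_basis d u0" using lrbD(6)[OF Lu0] .
  define T0 where "T0 = mat (Suc d) (Suc d) (\<lambda>(i, k). cf d u0 (w0 k) i)"
  have tr0: "is_transition d u0 w0 T0" unfolding T0_def by (rule transition_exists[OF Bu lrbD(6)[OF Lw0]])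
  have t0: "T0 $$ (0, 0) \<noteq> 0" by (rule transition_toeplitz(2)[OF lrb_jchain[OF Lu0] lrb_jchain[OF Lw0] C tr0])
  define t where "t = T0 $$ (0, 0)"
  have tc: "t = cf d u0 (w0 0) 0" unfolding t_def T0_def by simp
  define w where "w = (\<lambda>i. (1 / t) \<cdot>\<^sub>v w0 i)"
  have Lw: "lrb d C M Vw w" unfolding w_def by (rule lrb_scale[OF Lw0]) (use t0 t_def in simp)
  define T where "T = mat (Suc d) (Suc d) (\<lambda>(i, k). cf d u0 (w k) i)"
  have tr: "is_transition d u0 w T" unfolding T_def by (rule transition_exists[OF Bu lrbD(6)[OF Lw]])
  have tp: "toeplitz d T (\<lambda>j. T $$ (0, j))" by (rule transition_toeplitz(1)[OF lrb_jchain[OF Lu0] lrb_jchain[OF Lw] C tr])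
  have "T $$ (0, 0) = cf d u0 ((1 / t) \<cdot>\<^sub>v w0 0) 0" unfolding T_def w_def by simp
  also have "\<dots> = (1 / t) * t" using cf_smult[OF Bu lrb_carrier[OF Lw0, of 0], of 0] tc by simp
  also have "\<dots> = 1" using t0 t_def by simp
  finally have "T $$ (0, 0) = 1" .
  then have "tp_ok d C Y M u0 w T (\<lambda>j. T $$ (0, j))"
    unfolding tp_ok_def using lrb_LR_basis[OF Lu0] lrb_LR_basis[OF Lw] tr tp by simp
  then show ?thesis by blast
qed

lemma trans_param_eq: assumes Lu0: "lrb d C Y Vu u0" and Lw0: "lrb d C M Vw w0"
  and t: "tp_ok d C Y M u w T g" and i: "i \<le> d"
  shows "trans_param d C Y M i = g i"
  unfolding trans_param_def
proof (rule the_equality)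
  show "\<exists>u w T ga. LR_basis d C Y u \<and> LR_basis d C M w \<and> is_transition d u w T \<and> toeplitz d T ga \<and> ga 0 = 1 \<and> ga i = g i"
    using t unfolding tp_ok_def by (intro exI[of _ u] exI[of _ w] exI[of _ T] exI[of _ g]) simp
next
  fix x assume "\<exists>u w T ga. LR_basis d C Y u \<and> LR_basis d C M w \<and> is_transition d u w T \<and> toeplitz d T ga \<and> ga 0 = 1 \<and> ga i = x"
  then obtain u2 w2 T2 g2 where t2: "tp_ok d C Y M u2 w2 T2 g2" "g2 i = x" unfolding tp_ok_def by blast
  have "T = T2" by (rule tp_unique[OF Lu0 Lw0 t t2(1)])
  moreover have "T $$ (0, i) = g i" using toeplitz_ent[of d T g 0 i] t i unfolding tp_ok_def by simp
  moreover have "T2 $$ (0, i) = g2 i" using toeplitz_ent[of d T2 g2 0 i] t2 i unfolding tp_ok_def by simp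
  ultimately show "x = g i" using t2(2) by simp
qed

lemma rinv_unique: assumes "L \<in> carrier_mat n n" "T \<in> carrier_mat n n" "T' \<in> carrier_mat n n"
  "L * T = 1\<^sub>m n" "T * T' = 1\<^sub>m n"
  shows "T' = (L :: 'a::field mat)"
proof -
  have e1: "(L * T) * T' = T'" using assms(3,4) by (simp add: left_mult_one_mat)
  have e2: "L * (T * T') = L" using assms(1,5) by (simp add: right_mult_one_mat)
  have e3: "(L * T) * T' = L * (T * T')" using assms(1-3) by (rule assoc_mult_mat)
  show ?thesis using e1 e2 e3 by simp
qed

definition tpi_ok where
  "tpi_ok d C Y M u w T g T' h \<longleftrightarrow> tp_ok d C Y M u w T g \<and> T' \<in> carrier_mat (Suc d) (Suc d) \<and>
     inverts_mat T T' \<and> toeplitz d T' h"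

lemma tpi_transition: assumes Lu0: "lrb d C Y Vu u0" and Lw0: "lrb d C M Vw w0"
  and t: "tpi_ok d C Y M u w T g T' h"
  shows "T' = mat (Suc d) (Suc d) (\<lambda>(i, k). cf d w (u k) i)"
proof -
  have Lu: "lrb d C Y Vu u" and Lw: "lrb d C M Vw w" using tp_lrb[OF Lu0] tp_lrb[OF Lw0] t
    unfolding tpi_ok_def tp_ok_def by auto
  have tr: "is_transition d u w T" using t unfolding tpi_ok_def tp_ok_def by auto
  define L where "L = mat (Suc d) (Suc d) (\<lambda>(i, k). cf d w (u k) i)"
  have trL: "is_transition d w u L" unfolding L_def by (rule transition_exists[OF lrbD(6)[OF Lw] lrbD(6)[OF Lu]])
  have LT: "L * T = 1\<^sub>m (Suc d)" by (rule transition_mult[OF lrbD(6)[OF Lw] lrbD(6)[OF Lu] trL tr])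
  have car: "T \<in> carrier_mat (Suc d) (Suc d)" "L \<in> carrier_mat (Suc d) (Suc d)"
    using tr trL unfolding is_transition_def by auto
  have TT: "T * T' = 1\<^sub>m (Suc d)" using t car unfolding tpi_ok_def inverts_mat_def by auto
  have "T' = L" by (rule rinv_unique[OF car(2) car(1) _ LT TT]) (use t in \<open>simp add: tpi_ok_def\<close>)
  then show ?thesis unfolding L_def .
qed

lemma tpi_exists: assumes Lu0: "lrb d C Y Vu u0" and Lw0: "lrb d C M Vw w0"
  shows "\<exists>u w T g T' h. tpi_ok d C Y M u w T g T' h"
proof -
  obtain u w T g where t: "tp_ok d C Y M u w T g" using tp_exists[OF Lu0 Lw0] by blast
  have Lu: "lrb d C Y Vu u" and Lw: "lrb d C M Vw w" using tp_lrb[OF Lu0] tp_lrb[OF Lw0] t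
    unfolding tp_ok_def by auto
  have tr: "is_transition d u w T" using t unfolding tp_ok_def by auto
  define L where "L = mat (Suc d) (Suc d) (\<lambda>(i, k). cf d w (u k) i)"
  have trL: "is_transition d w u L" unfolding L_def by (rule transition_exists[OF lrbD(6)[OF Lw] lrbD(6)[OF Lu]])
  have TL: "T * L = 1\<^sub>m (Suc d)" by (rule transition_mult[OF lrbD(6)[OF Lu] lrbD(6)[OF Lw] tr trL])
  have tpL: "toeplitz d L (\<lambda>j. L $$ (0, j))"
    by (rule transition_toeplitz(1)[OF lrb_jchain[OF Lw] lrb_jchain[OF Lu] lrbD(1)[OF Lu] trL])
  have car: "T \<in> carrier_mat (Suc d) (Suc d)" "L \<in> carrier_mat (Suc d) (Suc d)"
    using tr trL unfolding is_transition_def by auto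
  have "tpi_ok d C Y M u w T g L (\<lambda>j. L $$ (0, j))"
    unfolding tpi_ok_def inverts_mat_def using t car TL tpL by auto
  then show ?thesis by blast
qed

lemma trans_inv_param_eq: assumes Lu0: "lrb d C Y Vu u0" and Lw0: "lrb d C M Vw w0"
  and t: "tpi_ok d C Y M u w T g T' h" and i: "i \<le> d"
  shows "trans_inv_param d C Y M i = h i"
  unfolding trans_inv_param_def
proof (rule the_equality)
  show "\<exists>u w T g T' ha. LR_basis d C Y u \<and> LR_basis d C M w \<and> is_transition d u w T \<and> toeplitz d T g \<and> g 0 = 1 \<and>
     T' \<in> carrier_mat (Suc d) (Suc d) \<and> inverts_mat T T' \<and> toeplitz d T' ha \<and> ha i = h i"
    using t unfolding tpi_ok_def tp_ok_def
    by (intro exI[of _ u] exI[of _ w] exI[of _ T] exI[of _ g] exI[of _ T'] exI[of _ h]) simp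
next
  fix x assume "\<exists>u w T g T' ha. LR_basis d C Y u \<and> LR_basis d C M w \<and> is_transition d u w T \<and> toeplitz d T g \<and> g 0 = 1 \<and>
     T' \<in> carrier_mat (Suc d) (Suc d) \<and> inverts_mat T T' \<and> toeplitz d T' ha \<and> ha i = x"
  then obtain u2 w2 T2 g2 T2' h2 where t2: "tpi_ok d C Y M u2 w2 T2 g2 T2' h2" "h2 i = x"
    unfolding tpi_ok_def tp_ok_def by blast
  have TT: "T = T2" by (rule tp_unique[OF Lu0 Lw0]) (use t t2 in \<open>auto simp: tpi_ok_def\<close>)
  have Lu: "lrb d C Y Vu u" and Lw: "lrb d C M Vw w" using tp_lrb[OF Lu0] tp_lrb[OF Lw0] t
    unfolding tpi_ok_def tp_ok_def by auto
  have tr: "is_transition d u w T" using t unfolding tpi_ok_def tp_ok_def by auto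
  define L where "L = mat (Suc d) (Suc d) (\<lambda>(i, k). cf d w (u k) i)"
  have trL: "is_transition d w u L" unfolding L_def by (rule transition_exists[OF lrbD(6)[OF Lw] lrbD(6)[OF Lu]])
  have LT: "L * T = 1\<^sub>m (Suc d)" by (rule transition_mult[OF lrbD(6)[OF Lw] lrbD(6)[OF Lu] trL tr])
  have car: "T \<in> carrier_mat (Suc d) (Suc d)" "L \<in> carrier_mat (Suc d) (Suc d)"
    using tr trL unfolding is_transition_def by auto
  have "T' = L" by (rule rinv_unique[OF car(2) car(1) _ LT]) (use t car in \<open>auto simp: tpi_ok_def inverts_mat_def\<close>)
  moreover have "T2' = L" by (rule rinv_unique[OF car(2) car(1) _ LT]) (use t2 car TT in \<open>auto simp: tpi_ok_def inverts_mat_def\<close>)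
  ultimately have "T' = T2'" by simp
  moreover have "T' $$ (0, i) = h i" using toeplitz_ent[of d T' h 0 i] t i unfolding tpi_ok_def by simp
  moreover have "T2' $$ (0, i) = h2 i" using toeplitz_ent[of d T2' h2 0 i] t2 i unfolding tpi_ok_def by simp
  ultimately show "x = h i" using t2(2) by simp
qed



lemma bip_main:
  fixes A B C :: "'a::field mat"
  assumes bip: "bipartite_LR_triple d A B C"
  shows "even d \<and> (\<forall>i\<le>d. (odd i \<longrightarrow> trans_param d C B A i = 0 \<and> trans_inv_param d C B A i = 0) \<and>
                          (even i \<longrightarrow> trans_param d C B A i \<noteq> 0 \<and> trans_inv_param d C B A i \<noteq> 0))"
proof -
  have P: "LR_pair d A B" "LR_pair d B C" "LR_pair d C A"
    and tr: "\<forall>i\<le>d. mtrace (C * proj_mat d (LR_decomp d A B) i) = 0 \<and>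
             mtrace (A * proj_mat d (LR_decomp d B C) i) = 0 \<and>
             mtrace (B * proj_mat d (LR_decomp d C A) i) = 0"
    using bip unfolding bipartite_LR_triple_def LR_triple_def by auto
  have Ac: "A \<in> carrier_mat (Suc d) (Suc d)" and Bc: "B \<in> carrier_mat (Suc d) (Suc d)"
    and Cc: "C \<in> carrier_mat (Suc d) (Suc d)" using P unfolding LR_pair_def by auto
  obtain Vab where Vab: "is_decomp d Vab" "lowers d A Vab" "raises d B Vab" using P(1) unfolding LR_pair_def by blast
  obtain Vbc where Vbc: "is_decomp d Vbc" "lowers d B Vbc" "raises d C Vbc" using P(2) unfolding LR_pair_def by blast
  obtain Vca where Vca: "is_decomp d Vca" "lowers d C Vca" "raises d A Vca" using P(3) unfolding LR_pair_def by blast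
  obtain v where Lab: "lrb d A B Vab v" using decomp_basis[OF Vab Ac Bc] by blast
  obtain y where Lbc: "lrb d B C Vbc y" using decomp_basis[OF Vbc Bc Cc] by blast
  obtain w0 where Lca: "lrb d C A Vca w0" using decomp_basis[OF Vca Cc Ac] by blast
  obtain u0 where Lcb: "lrb d C B (rev_dec d Vbc) u0"
    using decomp_basis[OF rev_decomp(1)[OF Lbc] rev_decomp(2)[OF Lbc] rev_decomp(3)[OF Lbc] Cc Bc] by blast
  obtain v' where Lba: "lrb d B A (rev_dec d Vab) v'"
    using decomp_basis[OF rev_decomp(1)[OF Lab] rev_decomp(2)[OF Lab] rev_decomp(3)[OF Lab] Bc Ac] by blast
  have LDbc: "LR_decomp d B C = Vbc" by (rule LR_decomp_eq[OF Vbc Bc Cc])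
  have LDca: "LR_decomp d C A = Vca" by (rule LR_decomp_eq[OF Vca Cc Ac])
  have trA: "\<And>i. i \<le> d \<Longrightarrow> mtrace (A * proj_mat d Vbc i) = 0" using tr LDbc by auto
  have trB: "\<And>i. i \<le> d \<Longrightarrow> mtrace (B * proj_mat d Vca i) = 0" using tr LDca by auto
  obtain u w T g T' h where t: "tpi_ok d C B A u w T g T' h" using tpi_exists[OF Lcb Lca] by blast
  have tp: "tp_ok d C B A u w T g" using t unfolding tpi_ok_def by simp
  have Lu: "lrb d C B (rev_dec d Vbc) u" using tp_lrb[OF Lcb] tp unfolding tp_ok_def by blast
  have Lw: "lrb d C A Vca w" using tp_lrb[OF Lca] tp unfolding tp_ok_def by blast
  have Bu: "is_basis d u" and Bw: "is_basis d w" using lrbD(6)[OF Lu] lrbD(6)[OF Lw] by auto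
  have trT: "is_transition d u w T" "toeplitz d T g" "g 0 = 1" using tp unfolding tp_ok_def by auto
  have T'eq: "T' = mat (Suc d) (Suc d) (\<lambda>(i, k). cf d w (u k) i)" by (rule tpi_transition[OF Lcb Lca t])
  have trT': "is_transition d w u T'" unfolding T'eq by (rule transition_exists[OF Bw Bu])
  have tpT': "toeplitz d T' h" using t unfolding tpi_ok_def by simp
  have Tcar: "T \<in> carrier_mat (Suc d) (Suc d)" "T' \<in> carrier_mat (Suc d) (Suc d)"
    using trT(1) trT' unfolding is_transition_def by auto
  have h0: "h 0 = 1"
  proof -
    have TT: "T * T' = 1\<^sub>m (Suc d)" using t Tcar unfolding tpi_ok_def inverts_mat_def by auto
    have "(T * T') $$ (0, 0) = (\<Sum>k<Suc d. T $$ (0, k) * T' $$ (k, 0))"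
      using Tcar by (simp add: scalar_prod_def atLeast0LessThan del: sum.lessThan_Suc)
    also have "\<dots> = (\<Sum>k<Suc d. if k = 0 then g 0 * h 0 else 0)"
    proof (rule sum.cong)
      fix k assume "k \<in> {..<Suc d}" then have k: "k \<le> d" by simp
      show "T $$ (0, k) * T' $$ (k, 0) = (if k = 0 then g 0 * h 0 else 0)"
        using toeplitz_ent[OF trT(2), of 0 k] toeplitz_ent[OF tpT' k, of 0] k by simp
    qed simp
    also have "\<dots> = g 0 * h 0" by simp
    finally show ?thesis using TT trT(3) by simp
  qed
  have alpha: "even d \<and> (\<forall>i\<le>d. (odd i \<longrightarrow> g i = 0) \<and> (even i \<longrightarrow> g i \<noteq> 0))"
  proof (rule core[OF Bu _ _ trT(2) trT(3) Ac])
    show "\<And>k. k \<le> d \<Longrightarrow> w k \<in> carrier_vec (Suc d)" by (rule lrb_carrier[OF Lw])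
    show wr: "\<And>k. k \<le> d \<Longrightarrow> w k = vsum d (\<lambda>i. T $$ (i, k) \<cdot>\<^sub>v u i)"
      using trT(1) unfolding is_transition_def by blast
    show "cf d u (A *\<^sub>v u 0) 0 = 0"
    proof -
      have Ws: "\<And>j. j \<le> d \<Longrightarrow> Vbc j = span1 (u (d - j))"
      proof -
        fix j assume j: "j \<le> d"
        have "rev_dec d Vbc (d - j) = span1 (u (d - j))" using lrbD(8)[OF Lu, of "d - j"] by simp
        moreover have "rev_dec d Vbc (d - j) = Vbc j" using j unfolding rev_dec_def by simp
        ultimately show "Vbc j = span1 (u (d - j))" by simp
      qed
      have Wh: "\<And>j. j > d \<Longrightarrow> Vbc j = {}" using decomp_high[OF Vbc(1)] .
      have "mtrace (A * proj_mat d Vbc d) = cf d (\<lambda>j. u (d - j)) (A *\<^sub>v u (d - d)) d"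
        using trace_proj[OF basis_rev[OF Bu] Ws Wh Ac, of d] by simp
      also have "\<dots> = cf d u (A *\<^sub>v u 0) 0" using cf_rev[OF Bu mult_carrier[OF Ac], of d] by simp
      finally show ?thesis using trA[of d] by simp
    qed
    show "\<And>i. 2 \<le> i \<Longrightarrow> i \<le> d \<Longrightarrow> cf d u (A *\<^sub>v u i) 0 = 0" by (rule h2gen[OF Lab Lu])
    show "\<And>k. k < d \<Longrightarrow> \<exists>a. a \<noteq> 0 \<and> A *\<^sub>v w k = a \<cdot>\<^sub>v w (Suc k)" by (rule lrb_raise[OF Lw])
    show "g d \<noteq> 0"
    proof
      assume gd: "g d = 0"
      have "T $$ (0, d) = 0" using toeplitz_ent[OF trT(2), of 0 d] gd by simp
      then show False
        using h4gen[OF Lab Lu lrb_carrier[OF Lw, of d] lrb_nonzero[OF Lw, of d] lrb_raise_top[OF Lw] wr[of d]]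
        by simp
    qed
  qed
  have beta: "even d \<and> (\<forall>i\<le>d. (odd i \<longrightarrow> h i = 0) \<and> (even i \<longrightarrow> h i \<noteq> 0))"
  proof (rule core[OF Bw _ _ tpT' h0 Bc])
    show "\<And>k. k \<le> d \<Longrightarrow> u k \<in> carrier_vec (Suc d)" by (rule lrb_carrier[OF Lu])
    show ur: "\<And>k. k \<le> d \<Longrightarrow> u k = vsum d (\<lambda>i. T' $$ (i, k) \<cdot>\<^sub>v w i)"
      using trT' unfolding is_transition_def by blast
    show "cf d w (B *\<^sub>v w 0) 0 = 0"
    proof -
      have Ws: "\<And>j. j \<le> d \<Longrightarrow> Vca j = span1 (w j)" using lrbD(8)[OF Lw] .
      have Wh: "\<And>j. j > d \<Longrightarrow> Vca j = {}" using decomp_high[OF Vca(1)] .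
      have "mtrace (B * proj_mat d Vca 0) = cf d w (B *\<^sub>v w 0) 0"
        by (rule trace_proj[OF Bw Ws Wh Bc le0])
      then show ?thesis using trB[of 0] by simp
    qed
    show "\<And>i. 2 \<le> i \<Longrightarrow> i \<le> d \<Longrightarrow> cf d w (B *\<^sub>v w i) 0 = 0" by (rule h2gen[OF Lba Lw])
    show "\<And>k. k < d \<Longrightarrow> \<exists>a. a \<noteq> 0 \<and> B *\<^sub>v u k = a \<cdot>\<^sub>v u (Suc k)" by (rule lrb_raise[OF Lu])
    show "h d \<noteq> 0"
    proof
      assume hd: "h d = 0"
      have "T' $$ (0, d) = 0" using toeplitz_ent[OF tpT', of 0 d] hd by simp
      then show False
        using h4gen[OF Lba Lw lrb_carrier[OF Lu, of d] lrb_nonzero[OF Lu, of d] lrb_raise_top[OF Lu] ur[of d]]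
        by simp
    qed
  qed
  have ga: "\<And>i. i \<le> d \<Longrightarrow> trans_param d C B A i = g i" by (rule trans_param_eq[OF Lcb Lca tp])
  have hb: "\<And>i. i \<le> d \<Longrightarrow> trans_inv_param d C B A i = h i" by (rule trans_inv_param_eq[OF Lcb Lca t])
  show ?thesis using alpha beta ga hb by simp
qed

lemma bip_rot: "bipartite_LR_triple d A B C \<Longrightarrow> bipartite_LR_triple d B C A"
  unfolding bipartite_LR_triple_def LR_triple_def by blast

theorem lemma16p6:
  fixes A B C :: "'a::field mat" and d :: nat
  assumes "bipartite_LR_triple d A B C"
  shows "even d \<and>
    (\<forall>i\<le>d. (odd i \<longrightarrow> alpha d A B C i = 0 \<and> alpha' d A B C i = 0 \<and> alpha'' d A B C i = 0 \<and>
                         beta d A B C i = 0 \<and> beta' d A B C i = 0 \<and> beta'' d A B C i = 0) \<and>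
            (even i \<longrightarrow> alpha d A B C i \<noteq> 0 \<and> alpha' d A B C i \<noteq> 0 \<and> alpha'' d A B C i \<noteq> 0 \<and>
                         beta d A B C i \<noteq> 0 \<and> beta' d A B C i \<noteq> 0 \<and> beta'' d A B C i \<noteq> 0))"
proof -
  have b2: "bipartite_LR_triple d B C A" by (rule bip_rot[OF assms])
  have b3: "bipartite_LR_triple d C A B" by (rule bip_rot[OF b2])
  note r1 = bip_main[OF assms] and r2 = bip_main[OF b2] and r3 = bip_main[OF b3]
  show ?thesis
    unfolding alpha_def alpha'_def alpha''_def beta_def beta'_def beta''_def
    using r1 r2 r3 by blast
qed


end
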